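(* Let $n\geq 2$ and let $k,l$ be integers with $0\leq l\leq k\leq n$. Let $(k,l)'$ denote the partition conjugate to $(k,l)$ (so its Young diagram has at most two columns, of lengths $k$ and $l$). Then the sign representation of $S_n$ occurs in the restriction of $W_{(k,l)'}(\mathbb C^n)$ to $S_n$ if and only if $(k,l)\in\{(n-1,0),(n,0),(n-1,1),(n,1)\}$. In each of these four cases it occurs with multiplicity exactly one.
   Context: For a partition $\lambda$ with at most $n$ parts, $W_\lambda(\mathbb C^n)$ denotes the irreducible polynomial representation (Weyl module) of $GL_n(\mathbb C)$ indexed by $\lambda$. $S_n$ is regarded as the subgroup of permutation matrices of $GL_n(\mathbb C)$, and "occurs in $W_\lambda(\mathbb C^n)$" refers to the decomposition of the restriction of $W_\lambda(\mathbb C^n)$ to this subgroup into irreducible $S_n$-representations. *)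

theory Defs
  imports Complex_Main "HOL-Library.Function_Algebras" "HOL-Combinatorics.Permutations"
begin

(* Partitions are lists of naturals (weakly decreasing).  Conjugate partition:
   the j-th part (j = 0,1,...) counts the parts of lambda exceeding j. *)
definition conj_part :: "nat list \<Rightarrow> nat list" where
  "conj_part lam = map (\<lambda>j. length (filter (\<lambda>x. j < x) lam)) [0..<Max (insert 0 (set lam))]"

(* Young diagram of lam with its cells numbered 0..d-1 in row-reading order
   (d = |lam|): row and column of cell number x. *)
definition row_of :: "nat list \<Rightarrow> nat \<Rightarrow> nat" where
  "row_of lam x = card {i. i < length lam \<and> sum_list (take (Suc i) lam) \<le> x}"

definition col_of :: "nat list \<Rightarrow> nat \<Rightarrow> nat" where
  "col_of lam x = x - sum_list (take (row_of lam x) lam)"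

definition row_group :: "nat list \<Rightarrow> (nat \<Rightarrow> nat) set" where
  "row_group lam = {p. p permutes {..<sum_list lam} \<and>
      (\<forall>x < sum_list lam. row_of lam (p x) = row_of lam x)}"

definition col_group :: "nat list \<Rightarrow> (nat \<Rightarrow> nat) set" where
  "col_group lam = {p. p permutes {..<sum_list lam} \<and>
      (\<forall>x < sum_list lam. col_of lam (p x) = col_of lam x)}"

(* Tensor power (C^n)^{\<otimes> d}: a tensor is its coordinate function on the basis
   e_{w 0} \<otimes> ... \<otimes> e_{w (d-1)}, indexed by words w : {..<d} \<rightarrow> {..<n}
   (extensional functions). *)
definition words :: "nat \<Rightarrow> nat \<Rightarrow> (nat \<Rightarrow> nat) set" where
  "words n d = Pi\<^sub>E {..<d} (\<lambda>_. {..<n})"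

definition tensors :: "nat \<Rightarrow> nat \<Rightarrow> ((nat \<Rightarrow> nat) \<Rightarrow> complex) set" where
  "tensors n d = {f. \<forall>w. w \<notin> words n d \<longrightarrow> f w = 0}"

definition pos_act :: "nat \<Rightarrow> nat \<Rightarrow> (nat \<Rightarrow> nat) \<Rightarrow> ((nat \<Rightarrow> nat) \<Rightarrow> complex) \<Rightarrow> ((nat \<Rightarrow> nat) \<Rightarrow> complex)" where
  "pos_act n d p f = (\<lambda>w. if w \<in> words n d then f (restrict (w \<circ> p) {..<d}) else 0)"

definition young_sym :: "nat list \<Rightarrow> nat \<Rightarrow> ((nat \<Rightarrow> nat) \<Rightarrow> complex) \<Rightarrow> ((nat \<Rightarrow> nat) \<Rightarrow> complex)" where
  "young_sym lam n f = (\<lambda>w. \<Sum>c\<in>col_group lam. \<Sum>r\<in>row_group lam.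
      of_int (sign c) * pos_act n (sum_list lam) c (pos_act n (sum_list lam) r f) w)"

definition weyl_module :: "nat list \<Rightarrow> nat \<Rightarrow> ((nat \<Rightarrow> nat) \<Rightarrow> complex) set" where
  "weyl_module lam n = young_sym lam n ` tensors n (sum_list lam)"

(* action of the permutation matrix of sigma (sigma permutes {..<n}) on tensors:
   e_{w} \<mapsto> e_{sigma \<circ> w} *)
definition perm_act :: "nat \<Rightarrow> nat \<Rightarrow> (nat \<Rightarrow> nat) \<Rightarrow> ((nat \<Rightarrow> nat) \<Rightarrow> complex) \<Rightarrow> ((nat \<Rightarrow> nat) \<Rightarrow> complex)" where
  "perm_act n d \<sigma> f = (\<lambda>u. if u \<in> words n d then f (restrict (inv \<sigma> \<circ> u) {..<d}) else 0)"

definition tscale :: "complex \<Rightarrow> ((nat \<Rightarrow> nat) \<Rightarrow> complex) \<Rightarrow> ((nat \<Rightarrow> nat) \<Rightarrow> complex)" where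
  "tscale c f = (\<lambda>w. c * f w)"

(* Multiplicity of the sign representation of S_n in W_lam(C^n) restricted to S_n
   = dim Hom_{S_n}(sgn, W) = dimension of the sign-isotypic subspace. *)
definition sign_multiplicity :: "nat list \<Rightarrow> nat \<Rightarrow> nat" where
  "sign_multiplicity lam n = vector_space.dim tscale
     {f \<in> weyl_module lam n. \<forall>\<sigma>. \<sigma> permutes {..<n} \<longrightarrow>
        perm_act n (sum_list lam) \<sigma> f = tscale (of_int (sign \<sigma>)) f}"

end

theory Submission
  imports Defs
begin

definition rowf :: "nat \<Rightarrow> nat \<Rightarrow> nat" where
  "rowf l p = (if p < 2*l then p div 2 else p - l)"
definition colf :: "nat \<Rightarrow> nat \<Rightarrow> nat" where
  "colf l p = (if p < 2*l then p mod 2 else 0)"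

lemma conj_part_kl:
  assumes "l \<le> k"
  shows "conj_part [k, l] = map (\<lambda>j. if j < l then 2 else 1) [0..<k]"
proof -
  have "Max (insert 0 (set [k, l])) = k" using assms by (auto simp: max_def)
  then show ?thesis unfolding conj_part_def
    by (intro map_cong) auto
qed

lemma sum_take_kl:
  assumes "i < k"
  shows "sum_list (take (Suc i) (map (\<lambda>j. if j < l then 2 else 1::nat) [0..<k])) =
    (if i < l then 2 * i + 2 else l + i + 1)"
proof -
  have "take (Suc i) (map (\<lambda>j. if j < l then 2 else 1::nat) [0..<k]) =
        map (\<lambda>j. if j < l then 2 else 1) [0..<Suc i]"
    using assms by (simp add: take_map)
  moreover have "sum_list (map (\<lambda>j::nat. if j < l then 2 else 1::nat) [0..<Suc i]) =
    (if i < l then 2 * i + 2 else l + i + 1)" for i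
    by (induction i) auto
  ultimately show ?thesis by simp
qed

lemma sum_list_kl:
  assumes "l \<le> k"
  shows "sum_list (conj_part [k, l]) = k + l"
proof (cases k)
  case 0 then show ?thesis using assms by (simp add: conj_part_kl)
next
  case (Suc i)
  have "sum_list (conj_part [k, l]) = sum_list (take (Suc i) (map (\<lambda>j. if j < l then 2 else 1) [0..<k]))"
    using Suc assms by (simp add: conj_part_kl)
  also have "\<dots> = k + l" using sum_take_kl[of i k l] Suc assms by auto
  finally show ?thesis .
qed

lemma row_of_kl:
  assumes "l \<le> k" "p < k + l"
  shows "row_of (conj_part [k, l]) p = rowf l p"
proof -
  have "{i. i < length (conj_part [k, l]) \<and> sum_list (take (Suc i) (conj_part [k, l])) \<le> p}
      = {i. i < k \<and> (if i < l then 2 * i + 2 else l + i + 1) \<le> p}"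
    using assms sum_take_kl[of _ k l] by (auto simp: conj_part_kl)
  also have "\<dots> = {..<rowf l p}"
  proof (intro set_eqI iffI)
    fix i assume "i \<in> {i. i < k \<and> (if i < l then 2 * i + 2 else l + i + 1) \<le> p}"
    then show "i \<in> {..<rowf l p}" using assms unfolding rowf_def
      by (auto split: if_splits; presburger)
  next
    fix i assume "i \<in> {..<rowf l p}"
    then show "i \<in> {i. i < k \<and> (if i < l then 2 * i + 2 else l + i + 1) \<le> p}" using assms unfolding rowf_def
      by (auto split: if_splits; presburger)
  qed
  finally show ?thesis unfolding row_of_def by simp
qed

lemma col_of_kl:
  assumes "l \<le> k" "p < k + l"
  shows "col_of (conj_part [k, l]) p = colf l p"
proof -
  have r: "rowf l p < k \<or> rowf l p = 0"
    using assms unfolding rowf_def by auto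
  have "sum_list (take (rowf l p) (conj_part [k, l])) = (if p < 2*l then 2 * (p div 2) else p)"
  proof (cases "rowf l p")
    case 0
    then show ?thesis using assms unfolding rowf_def by (auto split: if_splits)
  next
    case (Suc i)
    then have "i < k" using r by auto
    then show ?thesis using sum_take_kl[of i k l] Suc assms
      unfolding rowf_def by (auto simp: conj_part_kl split: if_splits)
  qed
  then show ?thesis unfolding col_of_def row_of_kl[OF assms] colf_def
    by (auto simp: minus_mod_eq_mult_div[symmetric])
qed

definition wr :: "nat \<Rightarrow> (nat \<Rightarrow> nat) \<Rightarrow> (nat \<Rightarrow> nat) \<Rightarrow> (nat \<Rightarrow> nat)" where
  "wr d w p = restrict (w \<circ> p) {..<d}"
definition vr :: "nat \<Rightarrow> (nat \<Rightarrow> nat) \<Rightarrow> (nat \<Rightarrow> nat) \<Rightarrow> (nat \<Rightarrow> nat)" where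
  "vr d t w = restrict (t \<circ> w) {..<d}"

definition Gp :: "nat \<Rightarrow> (nat \<Rightarrow> nat) \<Rightarrow> (nat \<Rightarrow> nat) set" where
  "Gp d g = {p. p permutes {..<d} \<and> (\<forall>x<d. g (p x) = g x)}"

lemma perm_lt: "p permutes {..<d} \<Longrightarrow> x < d \<Longrightarrow> p x < d"
  using permutes_in_image[of p "{..<d}" x] by simp

lemma perm_ge: "p permutes {..<d} \<Longrightarrow> \<not> x < d \<Longrightarrow> p x = x"
  using permutes_not_in[of p "{..<d}" x] by simp

lemma perm_inv_lt: "p permutes {..<d} \<Longrightarrow> x < d \<Longrightarrow> inv p x < d"
  using perm_lt permutes_inv by blast

lemma Gp_permutes: "p \<in> Gp d g \<Longrightarrow> p permutes {..<d}"
  by (simp add: Gp_def)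

lemma Gp_perm: "p \<in> Gp d g \<Longrightarrow> permutation p"
  by (meson Gp_permutes finite_lessThan permutes_imp_permutation)

lemma Gp_fin: "finite (Gp d g)"
proof -
  have "Gp d g \<subseteq> {p. p permutes {..<d}}" by (auto simp: Gp_def)
  then show ?thesis using finite_permutations[of "{..<d}"] finite_subset by blast
qed

lemma Gp_id: "id \<in> Gp d g"
  by (simp add: Gp_def permutes_id)

lemma Gp_comp: "p \<in> Gp d g \<Longrightarrow> q \<in> Gp d g \<Longrightarrow> p \<circ> q \<in> Gp d g"
  unfolding Gp_def by (auto intro: permutes_compose simp: perm_lt)

lemma Gp_inv: assumes "p \<in> Gp d g" shows "inv p \<in> Gp d g"
proof -
  have pp: "p permutes {..<d}" using assms by (simp add: Gp_def)
  have "g (inv p x) = g x" if "x < d" for x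
  proof -
    have "inv p x < d" using pp that by (simp add: perm_inv_lt)
    then have "g (p (inv p x)) = g (inv p x)" using assms by (simp add: Gp_def)
    then show ?thesis using pp by (simp add: permutes_inverses(1))
  qed
  then show ?thesis using pp by (simp add: Gp_def permutes_inv)
qed

lemma Gp_transpose:
  assumes "a < d" "b < d" "g a = g b"
  shows "Transposition.transpose a b \<in> Gp d g"
  using assms unfolding Gp_def
  by (auto simp: permutes_swap_id transpose_def)

lemma Gp_inv_comp: "p \<in> Gp d g \<Longrightarrow> inv p \<circ> p = id"
  by (meson Gp_permutes permutes_inv_o(2))
lemma Gp_comp_inv: "p \<in> Gp d g \<Longrightarrow> p \<circ> inv p = id"
  by (meson Gp_permutes permutes_inv_o(1))

lemma Gp_sum_left:
  fixes h :: "(nat \<Rightarrow> nat) \<Rightarrow> 'a::comm_monoid_add"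
  assumes "p \<in> Gp d g"
  shows "(\<Sum>c\<in>Gp d g. h (p \<circ> c)) = (\<Sum>c\<in>Gp d g. h c)"
proof (rule sum.reindex_bij_witness[where i = "\<lambda>c. inv p \<circ> c" and j = "\<lambda>c. p \<circ> c"])
  show "\<And>a. a \<in> Gp d g \<Longrightarrow> inv p \<circ> (p \<circ> a) = a"
    using Gp_inv_comp[OF assms] by (simp add: o_assoc)
  show "\<And>a. a \<in> Gp d g \<Longrightarrow> inv p \<circ> a \<in> Gp d g" using assms by (simp add: Gp_comp Gp_inv)
  show "\<And>a. a \<in> Gp d g \<Longrightarrow> p \<circ> (inv p \<circ> a) = a"
    using Gp_comp_inv[OF assms] by (simp add: o_assoc)
  show "\<And>a. a \<in> Gp d g \<Longrightarrow> p \<circ> a \<in> Gp d g" using assms by (simp add: Gp_comp)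
qed simp

lemma Gp_sum_right:
  fixes h :: "(nat \<Rightarrow> nat) \<Rightarrow> 'a::comm_monoid_add"
  assumes "p \<in> Gp d g"
  shows "(\<Sum>c\<in>Gp d g. h (c \<circ> p)) = (\<Sum>c\<in>Gp d g. h c)"
proof (rule sum.reindex_bij_witness[where i = "\<lambda>c. c \<circ> inv p" and j = "\<lambda>c. c \<circ> p"])
  show "\<And>a. a \<in> Gp d g \<Longrightarrow> a \<circ> p \<circ> inv p = a"
    using Gp_comp_inv[OF assms] by (simp add: o_assoc[symmetric])
  show "\<And>a. a \<in> Gp d g \<Longrightarrow> a \<circ> inv p \<in> Gp d g" using assms by (simp add: Gp_comp Gp_inv)
  show "\<And>a. a \<in> Gp d g \<Longrightarrow> a \<circ> inv p \<circ> p = a"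
    using Gp_inv_comp[OF assms] by (simp add: o_assoc[symmetric])
  show "\<And>a. a \<in> Gp d g \<Longrightarrow> a \<circ> p \<in> Gp d g" using assms by (simp add: Gp_comp)
qed simp

lemma words_memI: "(\<And>i. i < d \<Longrightarrow> w i < n) \<Longrightarrow> (\<And>i. i \<ge> d \<Longrightarrow> w i = undefined) \<Longrightarrow> w \<in> words n d"
  unfolding words_def PiE_def extensional_def by auto

lemma words_D: "w \<in> words n d \<Longrightarrow> i < d \<Longrightarrow> w i < n"
  unfolding words_def by auto

lemma words_ext: "w \<in> words n d \<Longrightarrow> \<not> i < d \<Longrightarrow> w i = undefined"
  unfolding words_def PiE_def extensional_def by auto

lemma words_eqI: "w \<in> words n d \<Longrightarrow> v \<in> words n d \<Longrightarrow> (\<And>i. i < d \<Longrightarrow> w i = v i) \<Longrightarrow> w = v"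
  using words_ext by (metis ext)

lemma wr_apply[simp]: "i < d \<Longrightarrow> wr d w p i = w (p i)"
  by (simp add: wr_def)
lemma vr_apply[simp]: "i < d \<Longrightarrow> vr d t w i = t (w i)"
  by (simp add: vr_def)

lemma wr_words: "w \<in> words n d \<Longrightarrow> p permutes {..<d} \<Longrightarrow> wr d w p \<in> words n d"
  by (rule words_memI) (auto simp: wr_def perm_lt words_D)

lemma vr_words: "w \<in> words n d \<Longrightarrow> t permutes {..<n} \<Longrightarrow> vr d t w \<in> words n d"
  by (rule words_memI) (auto simp: vr_def perm_lt words_D)

lemma wr_wr: "q permutes {..<d} \<Longrightarrow> wr d (wr d w p) q = wr d w (p \<circ> q)"
  by (auto simp: wr_def fun_eq_iff perm_lt)

lemma wr_vr: "q permutes {..<d} \<Longrightarrow> wr d (vr d t w) q = vr d t (wr d w q)"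
  by (auto simp: wr_def vr_def fun_eq_iff perm_lt)

lemma vr_vr: "vr d t (vr d s w) = vr d (t \<circ> s) w"
  by (auto simp: vr_def fun_eq_iff)

lemma wr_id: "w \<in> words n d \<Longrightarrow> wr d w id = w"
  by (rule words_eqI[of _ n d]) (auto simp: wr_def words_memI words_D)

abbreviation CG :: "nat \<Rightarrow> nat \<Rightarrow> (nat \<Rightarrow> nat) set" where
  "CG k l \<equiv> Gp (k + l) (colf l)"
abbreviation RG :: "nat \<Rightarrow> nat \<Rightarrow> (nat \<Rightarrow> nat) set" where
  "RG k l \<equiv> Gp (k + l) (rowf l)"

lemma col_group_kl: "l \<le> k \<Longrightarrow> col_group (conj_part [k, l]) = CG k l"
  unfolding col_group_def Gp_def sum_list_kl
  by (auto simp: col_of_kl perm_lt)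

lemma row_group_kl: "l \<le> k \<Longrightarrow> row_group (conj_part [k, l]) = RG k l"
  unfolding row_group_def Gp_def sum_list_kl
  by (auto simp: row_of_kl perm_lt)

definition iso :: "nat \<Rightarrow> nat \<Rightarrow> ((nat \<Rightarrow> nat) \<Rightarrow> complex) \<Rightarrow> bool" where
  "iso n d f \<longleftrightarrow> (\<forall>v\<in>words n d. \<forall>t. t permutes {..<n} \<longrightarrow> f (vr d t v) = of_int (sign t) * f v)"

definition Gf :: "nat \<Rightarrow> nat \<Rightarrow> ((nat \<Rightarrow> nat) \<Rightarrow> complex) \<Rightarrow> (nat \<Rightarrow> nat) \<Rightarrow> complex" where
  "Gf k l f u = (\<Sum>r\<in>RG k l. f (wr (k + l) u r))"

definition Yf :: "nat \<Rightarrow> nat \<Rightarrow> ((nat \<Rightarrow> nat) \<Rightarrow> complex) \<Rightarrow> (nat \<Rightarrow> nat) \<Rightarrow> complex" where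
  "Yf k l f w = (\<Sum>c\<in>CG k l. of_int (sign c) * Gf k l f (wr (k + l) w c))"

lemma young_sym_kl:
  assumes "l \<le> k"
  shows "young_sym (conj_part [k, l]) n f w = (if w \<in> words n (k + l) then Yf k l f w else 0)"
proof (cases "w \<in> words n (k + l)")
  case True
  have "young_sym (conj_part [k, l]) n f w =
     (\<Sum>c\<in>CG k l. \<Sum>r\<in>RG k l. of_int (sign c) * f (wr (k + l) (wr (k + l) w c) r))"
    unfolding young_sym_def col_group_kl[OF assms] row_group_kl[OF assms] sum_list_kl[OF assms]
    using True by (intro sum.cong refl) (auto simp: pos_act_def wr_def[symmetric] wr_words Gp_permutes)
  then show ?thesis using True by (simp add: Yf_def Gf_def sum_distrib_left)
next
  case False
  then show ?thesis by (simp add: young_sym_def pos_act_def sum_list_kl[OF assms])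
qed

lemma Y1:
  assumes "iso n (k + l) f" "w \<in> words n (k + l)" "t permutes {..<n}"
  shows "Yf k l f (vr (k + l) t w) = of_int (sign t) * Yf k l f w"
proof -
  have "Gf k l f (wr (k + l) (vr (k + l) t w) c) = of_int (sign t) * Gf k l f (wr (k + l) w c)"
    if c: "c \<in> CG k l" for c
  proof -
    have "Gf k l f (wr (k + l) (vr (k + l) t w) c) = (\<Sum>r\<in>RG k l. of_int (sign t) * f (wr (k + l) (wr (k + l) w c) r))"
      unfolding Gf_def
    proof (intro sum.cong refl)
      fix r assume r: "r \<in> RG k l"
      have "wr (k + l) (wr (k + l) (vr (k + l) t w) c) r = vr (k + l) t (wr (k + l) (wr (k + l) w c) r)"
        using c r by (simp add: wr_vr Gp_permutes)
      moreover have "wr (k + l) (wr (k + l) w c) r \<in> words n (k + l)"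
        using c r assms(2) by (simp add: wr_words Gp_permutes)
      ultimately show "f (wr (k + l) (wr (k + l) (vr (k + l) t w) c) r) = of_int (sign t) * f (wr (k + l) (wr (k + l) w c) r)"
        using assms(1,3) unfolding iso_def by simp
    qed
    then show ?thesis by (simp add: Gf_def sum_distrib_left)
  qed
  then show ?thesis unfolding Yf_def by (simp add: sum_distrib_left mult_ac)
qed

lemma Y2:
  assumes "c0 \<in> CG k l"
  shows "Yf k l f (wr (k + l) w c0) = of_int (sign c0) * Yf k l f w"
proof -
  define H where "H c = Gf k l f (wr (k + l) w c)" for c
  define phi where "phi c = of_int (sign (inv c0 \<circ> c)) * H c" for c
  have "Yf k l f (wr (k + l) w c0) = (\<Sum>c\<in>CG k l. of_int (sign c) * H (c0 \<circ> c))"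
    unfolding Yf_def H_def by (intro sum.cong refl) (simp add: wr_wr Gp_permutes)
  also have "\<dots> = (\<Sum>c\<in>CG k l. phi (c0 \<circ> c))"
    unfolding phi_def by (intro sum.cong refl) (simp add: o_assoc Gp_inv_comp[OF assms])
  also have "\<dots> = (\<Sum>c\<in>CG k l. phi c)" by (rule Gp_sum_left[OF assms])
  also have "\<dots> = (\<Sum>c\<in>CG k l. of_int (sign c0) * (of_int (sign c) * H c))"
    unfolding phi_def
  proof (intro sum.cong refl)
    fix c assume c: "c \<in> CG k l"
    have "sign (inv c0 \<circ> c) = sign c0 * sign c"
      using sign_compose[OF Gp_perm[OF Gp_inv[OF assms]] Gp_perm[OF c]]
        sign_inverse[OF Gp_perm[OF assms]] by simp
    then show "of_int (sign (inv c0 \<circ> c)) * H c = of_int (sign c0) * (of_int (sign c) * H c)"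
      by simp
  qed
  also have "\<dots> = of_int (sign c0) * Yf k l f w"
    unfolding Yf_def H_def by (simp add: sum_distrib_left)
  finally show ?thesis .
qed

definition uniq :: "nat \<Rightarrow> (nat \<Rightarrow> nat) \<Rightarrow> nat \<Rightarrow> bool" where
  "uniq d u j \<longleftrightarrow> (\<forall>i<d. u i = u j \<longrightarrow> i = j)"

lemma uniq_wr':
  assumes "p permutes {..<d}" "j < d" "uniq d u (p j)"
  shows "uniq d (wr d u p) j"
  unfolding uniq_def
proof (intro allI impI)
  fix i assume i: "i < d" "wr d u p i = wr d u p j"
  then have "u (p i) = u (p j)" using assms by simp
  then have "p i = p j" using assms(3) perm_lt[OF assms(1) i(1)] unfolding uniq_def by blast
  then show "i = j" using assms(1) by (metis permutes_inj injD)
qed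

lemma complex_eq_neg: "(x::complex) = - x \<Longrightarrow> x = 0"
  by simp

lemma Z1:
  assumes "w \<in> words n (k + l)" "p \<noteq> q" "p < k + l" "q < k + l" "colf l p = colf l q" "w p = w q"
  shows "Yf k l f w = 0"
proof -
  let ?t = "Transposition.transpose p q"
  have t: "?t \<in> CG k l" using assms by (intro Gp_transpose) auto
  have "wr (k + l) w ?t = w"
    by (rule words_eqI[OF _ assms(1)]) (use assms t in \<open>auto simp: wr_words Gp_permutes transpose_def\<close>)
  then have "Yf k l f w = of_int (sign ?t) * Yf k l f w" using Y2[OF t, of f w] by simp
  then show ?thesis using assms(2) by (simp add: sign_swap_id)
qed

lemma Z2:
  assumes "iso n (k + l) f" "w \<in> words n (k + l)" "a \<noteq> b" "a < n" "b < n"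
    "\<And>i. i < k + l \<Longrightarrow> w i \<noteq> a \<and> w i \<noteq> b"
  shows "Yf k l f w = 0"
proof -
  let ?t = "Transposition.transpose a b"
  have t: "?t permutes {..<n}" using assms by (intro permutes_swap_id) auto
  have "vr (k + l) ?t w = w"
    by (rule words_eqI[OF _ assms(2)]) (use assms t in \<open>auto simp: vr_words transpose_def\<close>)
  then have "Yf k l f w = of_int (sign ?t) * Yf k l f w" using Y1[OF assms(1,2) t] by simp
  then show ?thesis using assms(3) by (simp add: sign_swap_id)
qed

lemma sign_two_swaps:
  assumes "a \<noteq> b" "c \<noteq> e"
  shows "sign (Transposition.transpose a b \<circ> Transposition.transpose c e) = 1"
  using assms by (simp add: sign_compose permutation_swap_id sign_swap_id)

lemma Z3:
  assumes "iso n (k + l) f" "w \<in> words n (k + l)"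
    "P \<noteq> P'" "Q \<noteq> Q'" "P < k + l" "P' < k + l" "Q < k + l" "Q' < k + l"
    "colf l P = 0" "colf l P' = 0" "colf l Q = 1" "colf l Q' = 1"
    "w P = a" "w Q = a" "w P' = b" "w Q' = b" "a \<noteq> b"
    "\<And>j. j < k + l \<Longrightarrow> w j = a \<Longrightarrow> j = P \<or> j = Q"
    "\<And>j. j < k + l \<Longrightarrow> w j = b \<Longrightarrow> j = P' \<or> j = Q'"
  shows "Yf k l f w = 0"
proof -
  let ?t = "Transposition.transpose a b"
  let ?c = "Transposition.transpose P P' \<circ> Transposition.transpose Q Q'"
  have an: "a < n" "b < n" using words_D[OF assms(2) assms(5)] words_D[OF assms(2) assms(6)] assms(13,15) by auto
  have t: "?t permutes {..<n}" using an by (intro permutes_swap_id) auto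
  have c: "?c \<in> CG k l" using assms(5-12) by (intro Gp_comp Gp_transpose) auto
  have PQ: "P \<noteq> Q" "P \<noteq> Q'" "P' \<noteq> Q" "P' \<noteq> Q'" using assms(9-12) by auto
  have "vr (k + l) ?t w = wr (k + l) w ?c"
  proof (rule words_eqI[of _ n "k + l"])
    show "vr (k + l) ?t w \<in> words n (k + l)" using assms(2) t by (rule vr_words)
    show "wr (k + l) w ?c \<in> words n (k + l)" using c assms(2) by (simp add: wr_words Gp_permutes)
    fix i assume i: "i < k + l"
    have "?c i = (if i = P then P' else if i = P' then P else if i = Q then Q' else if i = Q' then Q else i)"
      using PQ by (simp add: transpose_def)
    moreover have "i \<noteq> P \<Longrightarrow> i \<noteq> Q \<Longrightarrow> w i \<noteq> a" using assms(18)[OF i] by blast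
    moreover have "i \<noteq> P' \<Longrightarrow> i \<noteq> Q' \<Longrightarrow> w i \<noteq> b" using assms(19)[OF i] by blast
    ultimately show "vr (k + l) ?t w i = wr (k + l) w ?c i"
      using i assms(13-17) by (simp add: transpose_def)
  qed
  note eq = this
  have sc: "sign ?c = 1" using assms(3,4) by (rule sign_two_swaps)
  have st: "sign ?t = -1" using assms(17) by (simp add: sign_swap_id)
  have e1: "Yf k l f (vr (k + l) ?t w) = - Yf k l f w" using Y1[OF assms(1,2) t] st by simp
  have e2: "Yf k l f (wr (k + l) w ?c) = Yf k l f w" using Y2[OF c, of f w] sc by simp
  have "- Yf k l f w = Yf k l f w" using e1 e2 eq by metis
  then show ?thesis by simp
qed

lemma L_swap:
  assumes "iso n d f" "v \<in> words n d" "p \<noteq> q" "p < d" "q < d" "uniq d v p" "uniq d v q"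
  shows "f (wr d v (Transposition.transpose p q)) = - f v"
proof -
  let ?t = "Transposition.transpose (v p) (v q)"
  have ne: "v p \<noteq> v q" using assms(3,5,6) unfolding uniq_def by metis
  have t: "?t permutes {..<n}" using words_D[OF assms(2) assms(4)] words_D[OF assms(2) assms(5)] by (intro permutes_swap_id) auto
  have "vr d ?t v = wr d v (Transposition.transpose p q)"
  proof (rule words_eqI[of _ n d])
    show "vr d ?t v \<in> words n d" using assms(2) t by (rule vr_words)
    show "wr d v (Transposition.transpose p q) \<in> words n d"
      using assms by (intro wr_words permutes_swap_id) auto
    fix i assume i: "i < d"
    have "i \<noteq> p \<Longrightarrow> v i \<noteq> v p" "i \<noteq> q \<Longrightarrow> v i \<noteq> v q"
      using assms(6,7) i unfolding uniq_def by blast+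
    then show "vr d ?t v i = wr d v (Transposition.transpose p q) i"
      using i assms(3) by (cases "i = p"; cases "i = q") (simp_all add: transpose_def)
  qed
  moreover have "f (vr d ?t v) = of_int (sign ?t) * f v" using assms(1,2) t unfolding iso_def by blast
  ultimately show ?thesis using ne by (simp add: sign_swap_id)
qed

lemma rowf_eq:
  assumes "m < l" "rowf l x = m"
  shows "x = 2 * m \<or> x = 2 * m + 1"
  using assms unfolding rowf_def by (auto split: if_splits)

lemma freerow:
  assumes "iso n (k + l) f" "u \<in> words n (k + l)" "m < l" "l \<le> k"
    "uniq (k + l) u (2 * m)" "uniq (k + l) u (2 * m + 1)"
  shows "Gf k l f u = 0"
proof -
  let ?d = "k + l"
  let ?s = "Transposition.transpose (2 * m) (2 * m + 1)"
  have lt: "2 * m < ?d" "2 * m + 1 < ?d" using assms by auto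
  have s: "?s \<in> RG k l" using lt assms(3) by (intro Gp_transpose) (auto simp: rowf_def)
  have "Gf k l f u = (\<Sum>r\<in>RG k l. f (wr ?d u (r \<circ> ?s)))"
    unfolding Gf_def using Gp_sum_right[OF s, of "\<lambda>r. f (wr ?d u r)"] by simp
  also have "\<dots> = (\<Sum>r\<in>RG k l. - f (wr ?d u r))"
  proof (intro sum.cong refl)
    fix r assume r: "r \<in> RG k l"
    have rp: "r permutes {..<?d}" using r by (rule Gp_permutes)
    have rr: "rowf l (r x) = rowf l x" if "x < ?d" for x using r that by (simp add: Gp_def)
    have u1: "uniq ?d u (r (2 * m))" "uniq ?d u (r (2 * m + 1))"
    proof -
      have "rowf l (2 * m) = m" "rowf l (2 * m + 1) = m" using assms(3) by (auto simp: rowf_def)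
      then have "rowf l (r (2 * m)) = m" "rowf l (r (2 * m + 1)) = m" using rr lt by auto
      then have "r (2 * m) = 2 * m \<or> r (2 * m) = 2 * m + 1" "r (2 * m + 1) = 2 * m \<or> r (2 * m + 1) = 2 * m + 1"
        using rowf_eq assms(3) by blast+
      then show "uniq ?d u (r (2 * m))" "uniq ?d u (r (2 * m + 1))" using assms(5,6) by auto
    qed
    have "f (wr ?d (wr ?d u r) ?s) = - f (wr ?d u r)"
    proof (rule L_swap[OF assms(1)])
      show "wr ?d u r \<in> words n ?d" using assms(2) rp by (rule wr_words)
      show "2 * m \<noteq> 2 * m + 1" by simp
      show "2 * m < ?d" "2 * m + 1 < ?d" by (fact lt)+
      show "uniq ?d (wr ?d u r) (2 * m)" by (rule uniq_wr'[OF rp lt(1) u1(1)])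
      show "uniq ?d (wr ?d u r) (2 * m + 1)" by (rule uniq_wr'[OF rp lt(2) u1(2)])
    qed
    moreover have "wr ?d (wr ?d u r) ?s = wr ?d u (r \<circ> ?s)"
      using lt by (intro wr_wr permutes_swap_id) auto
    ultimately show "f (wr ?d u (r \<circ> ?s)) = - f (wr ?d u r)" by simp
  qed
  also have "\<dots> = - Gf k l f u" by (simp add: Gf_def sum_negf)
  finally show ?thesis by simp
qed

lemma Z4:
  assumes "iso n (k + l) f" "w \<in> words n (k + l)" "1 \<le> l" "l \<le> k" "inj_on w {..<k + l}"
  shows "Yf k l f w = 0"
proof -
  have "Gf k l f (wr (k + l) w c) = 0" if c: "c \<in> CG k l" for c
  proof (rule freerow[OF assms(1) _ _ assms(4)])
    have cp: "c permutes {..<k + l}" using c by (rule Gp_permutes)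
    show "wr (k + l) w c \<in> words n (k + l)" using assms(2) cp by (rule wr_words)
    show "0 < l" using assms by simp
    have "uniq (k + l) w j" if "j < k + l" for j
      using assms(5) that unfolding uniq_def inj_on_def by auto
    moreover have "0 < k + l" "1 < k + l" using assms(3,4) by auto
    ultimately show "uniq (k + l) (wr (k + l) w c) (2 * 0)" "uniq (k + l) (wr (k + l) w c) (2 * 0 + 1)"
      using cp by (auto intro!: uniq_wr' perm_lt)
  qed
  then show ?thesis by (simp add: Yf_def)
qed

definition cfg :: "nat \<Rightarrow> (nat \<Rightarrow> nat) \<Rightarrow> nat \<Rightarrow> nat \<Rightarrow> bool" where
  "cfg d u P Q \<longleftrightarrow> u P = u Q \<and> (\<forall>j<d. j \<noteq> P \<and> j \<noteq> Q \<longrightarrow> uniq d u j)"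

lemma cfg_wr:
  assumes "p permutes {..<d}" "P < d" "Q < d" "cfg d u P Q"
  shows "cfg d (wr d u p) (inv p P) (inv p Q)"
  unfolding cfg_def
proof (intro conjI allI impI)
  have ip: "inv p P < d" "inv p Q < d" using assms by (auto intro: perm_inv_lt)
  have pi: "p (inv p P) = P" "p (inv p Q) = Q" using assms(1) by (auto simp: permutes_inverses(1))
  show "wr d u p (inv p P) = wr d u p (inv p Q)" using ip pi assms(4) by (simp add: cfg_def)
  fix j assume j: "j < d" "j \<noteq> inv p P \<and> j \<noteq> inv p Q"
  have "p j \<noteq> P" "p j \<noteq> Q" using j assms(1) by (metis permutes_inverses(2))+
  then have "uniq d u (p j)" using assms(4) perm_lt[OF assms(1) j(1)] by (simp add: cfg_def)
  then show "uniq d (wr d u p) j" by (rule uniq_wr'[OF assms(1) j(1)])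
qed

definition kap :: "nat \<Rightarrow> nat" where
  "kap = Transposition.transpose 0 2 \<circ> Transposition.transpose 1 3"
definition hh :: "nat \<Rightarrow> nat" where
  "hh = Transposition.transpose 0 1 \<circ> Transposition.transpose 2 3"

lemma kap_CG: "2 \<le> l \<Longrightarrow> l \<le> k \<Longrightarrow> kap \<in> CG k l"
  unfolding kap_def by (intro Gp_comp Gp_transpose) (auto simp: colf_def)

lemma hh_RG: "2 \<le> l \<Longrightarrow> l \<le> k \<Longrightarrow> hh \<in> RG k l"
  unfolding hh_def by (intro Gp_comp Gp_transpose) (auto simp: rowf_def)

lemma sign_kap: "sign kap = 1"
  unfolding kap_def by (rule sign_two_swaps) auto

lemma kap_apply: "kap i = (if i = 0 then 2 else if i = 1 then 3 else if i = 2 then 0 else if i = 3 then 1 else i)"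
  by (simp add: kap_def transpose_def)

lemma hh_apply: "hh i = (if i = 0 then 1 else if i = 1 then 0 else if i = 2 then 3 else if i = 3 then 2 else i)"
  by (simp add: hh_def transpose_def)

lemma cross_eq:
  assumes "u \<in> words n d" "4 \<le> d" "cfg d u P Q"
    "(P = 0 \<and> Q = 3 \<and> a = 1 \<and> b = 2) \<or> (P = 2 \<and> Q = 1 \<and> a = 0 \<and> b = 3)"
  shows "wr d u kap = vr d (Transposition.transpose (u a) (u b)) (wr d u hh)"
proof -
  have ua: "uniq d u a" "uniq d u b" using assms(2-4) unfolding cfg_def by auto
  have dd: "a \<noteq> b" "P \<noteq> a" "P \<noteq> b" "a < d" "b < d" "P < d" using assms(2,4) by auto
  have ne1: "u a \<noteq> u b" using ua(2) dd unfolding uniq_def by blast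
  have ne2: "u P \<noteq> u a" using ua(1) dd unfolding uniq_def by blast
  have ne3: "u P \<noteq> u b" using ua(2) dd unfolding uniq_def by blast
  have ne4: "u Q = u P" using assms(3) unfolding cfg_def by simp
  have oth: "u i \<noteq> u a" "u i \<noteq> u b" if "i < d" "i \<noteq> a" "i \<noteq> b" for i
    using ua that unfolding uniq_def by blast+
  show ?thesis
  proof (rule ext)
    fix i
    show "wr d u kap i = vr d (Transposition.transpose (u a) (u b)) (wr d u hh) i"
    proof (cases "i < d")
      case False then show ?thesis by (simp add: wr_def vr_def)
    next
      case True
      have big: "u i \<noteq> u a \<and> u i \<noteq> u b" if "i \<ge> 4" using oth[OF True] assms(4) that by auto
      consider "i = 0" | "i = 1" | "i = 2" | "i = 3" | "i \<ge> 4" by linarith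
      then show ?thesis
      proof cases
        case 5 then show ?thesis using True big by (simp add: kap_apply hh_apply transpose_def)
      qed (use True assms(2,4) ne1 ne2 ne3 ne4 in \<open>(elim disjE; simp add: kap_apply hh_apply transpose_def)+\<close>)
    qed
  qed
qed

lemma kap_lt: "i < d \<Longrightarrow> 4 \<le> d \<Longrightarrow> kap i < d"
  by (simp add: kap_apply)

lemma K_cross:
  fixes a b :: nat
  assumes "iso n (k + l) f" "u \<in> words n (k + l)" "2 \<le> l" "l \<le> k" "cfg (k + l) u P Q"
    "(P = 0 \<and> Q = 3 \<and> a = 1 \<and> b = 2) \<or> (P = 2 \<and> Q = 1 \<and> a = 0 \<and> b = 3)"
  shows "Gf k l f (wr (k + l) u kap) = - Gf k l f u"
proof -
  let ?d = "k + l"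
  let ?t = "Transposition.transpose (u a) (u b)"
  have d4: "4 \<le> ?d" using assms(3,4) by simp
  have ab: "a < ?d" "b < ?d" "a \<noteq> b" using assms(6) d4 by auto
  have cf: "\<And>j. j < ?d \<Longrightarrow> j \<noteq> P \<Longrightarrow> j \<noteq> Q \<Longrightarrow> uniq ?d u j"
    using assms(5) unfolding cfg_def by blast
  have "a < ?d" "a \<noteq> P" "a \<noteq> Q" using assms(6) d4 by auto
  then have ua: "uniq ?d u a" by (rule cf)
  have ne: "u a \<noteq> u b" using ua ab unfolding uniq_def by metis
  have t: "?t permutes {..<n}" using words_D[OF assms(2) ab(1)] words_D[OF assms(2) ab(2)]
    by (intro permutes_swap_id) auto
  have st: "sign ?t = -1" using ne by (simp add: sign_swap_id)
  have hR: "hh \<in> RG k l" by (rule hh_RG[OF assms(3,4)])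
  have eq: "wr ?d u kap = vr ?d ?t (wr ?d u hh)" by (rule cross_eq[OF assms(2) d4 assms(5,6)])
  have "Gf k l f (wr ?d u kap) = (\<Sum>r\<in>RG k l. - f (wr ?d u (hh \<circ> r)))"
    unfolding Gf_def
  proof (intro sum.cong refl)
    fix r assume r: "r \<in> RG k l"
    have rp: "r permutes {..<?d}" using r by (rule Gp_permutes)
    have hp: "hh permutes {..<?d}" using hR by (rule Gp_permutes)
    have "wr ?d (wr ?d u kap) r = vr ?d ?t (wr ?d u (hh \<circ> r))"
      unfolding eq using rp by (simp add: wr_vr wr_wr)
    moreover have "wr ?d u (hh \<circ> r) \<in> words n ?d"
      using assms(2) hp rp by (intro wr_words permutes_compose)
    ultimately show "f (wr ?d (wr ?d u kap) r) = - f (wr ?d u (hh \<circ> r))"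
      using assms(1) t st unfolding iso_def by simp
  qed
  also have "\<dots> = - (\<Sum>r\<in>RG k l. f (wr ?d u (hh \<circ> r)))" by (simp add: sum_negf)
  also have "(\<Sum>r\<in>RG k l. f (wr ?d u (hh \<circ> r))) = Gf k l f u"
    unfolding Gf_def by (rule Gp_sum_left[OF hR, of "\<lambda>r. f (wr ?d u r)"])
  finally show ?thesis .
qed

lemma K:
  assumes "iso n (k + l) f" "u \<in> words n (k + l)" "2 \<le> l" "l \<le> k"
    "P < k + l" "Q < k + l" "colf l P = 0" "colf l Q = 1" "cfg (k + l) u P Q"
  shows "Gf k l f (wr (k + l) u kap) = - Gf k l f u"
proof (cases "\<exists>m<l. 2 * m \<noteq> P \<and> 2 * m \<noteq> Q \<and> 2 * m + 1 \<noteq> P \<and> 2 * m + 1 \<noteq> Q")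
  case True
  then obtain m where m: "m < l" "2 * m \<noteq> P" "2 * m \<noteq> Q" "2 * m + 1 \<noteq> P" "2 * m + 1 \<noteq> Q" by blast
  have lt: "2 * m < k + l" "2 * m + 1 < k + l" using m assms by auto
  have u1: "uniq (k + l) u (2 * m)" "uniq (k + l) u (2 * m + 1)"
    using assms(9) m lt unfolding cfg_def by auto
  have g0: "Gf k l f u = 0" by (rule freerow[OF assms(1,2) m(1) assms(4) u1])
  define m' where "m' = (if m = 0 then 1 else if m = 1 then 0 else m)"
  have m': "m' < l" "kap (2 * m') = 2 * m" "kap (2 * m' + 1) = 2 * m + 1"
    using m assms(3) unfolding m'_def by (auto simp: kap_apply)
  have lt': "2 * m' < k + l" "2 * m' + 1 < k + l" using m' assms by auto
  have kp: "kap permutes {..<k + l}" using kap_CG[OF assms(3,4)] by (rule Gp_permutes)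
  have "Gf k l f (wr (k + l) u kap) = 0"
  proof (rule freerow[OF assms(1) _ m'(1) assms(4)])
    show "wr (k + l) u kap \<in> words n (k + l)" using assms(2) kp by (rule wr_words)
    show "uniq (k + l) (wr (k + l) u kap) (2 * m')" using u1 m' by (intro uniq_wr'[OF kp lt'(1)]) simp
    show "uniq (k + l) (wr (k + l) u kap) (2 * m' + 1)" using u1 m' by (intro uniq_wr'[OF kp lt'(2)]) simp
  qed
  then show ?thesis using g0 by simp
next
  case False
  then have F: "\<And>m. m < l \<Longrightarrow> 2 * m = P \<or> 2 * m = Q \<or> 2 * m + 1 = P \<or> 2 * m + 1 = Q"
    by blast
  have h0: "0 = P \<or> 0 = Q \<or> 1 = P \<or> 1 = Q" using F[of 0] assms(3) by simp
  have h1: "2 = P \<or> 2 = Q \<or> 3 = P \<or> 3 = Q" using F[of 1] assms(3) by simp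
  have cP: "P \<noteq> 1" "P \<noteq> 3" "Q \<noteq> 0" "Q \<noteq> 2" using assms(3,7,8) by (auto simp: colf_def split: if_splits)
  then have "(P = 0 \<and> Q = 3) \<or> (P = 2 \<and> Q = 1)" using h0 h1 by auto
  then show ?thesis
  proof
    assume "P = 0 \<and> Q = 3"
    then show ?thesis by (intro K_cross[OF assms(1-4,9), of 1 2]) auto
  next
    assume "P = 2 \<and> Q = 1"
    then show ?thesis by (intro K_cross[OF assms(1-4,9), of 0 3]) auto
  qed
qed

lemma Z5:
  assumes "iso n (k + l) f" "w \<in> words n (k + l)" "2 \<le> l" "l \<le> k"
    "P < k + l" "Q < k + l" "colf l P = 0" "colf l Q = 1" "cfg (k + l) w P Q"
  shows "Yf k l f w = 0"
proof -
  let ?d = "k + l"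
  have kC: "kap \<in> CG k l" by (rule kap_CG[OF assms(3,4)])
  have kp: "kap permutes {..<?d}" using kC by (rule Gp_permutes)
  have "Yf k l f w = (\<Sum>c\<in>CG k l. of_int (sign (c \<circ> kap)) * Gf k l f (wr ?d w (c \<circ> kap)))"
    unfolding Yf_def by (rule Gp_sum_right[OF kC, symmetric])
  also have "\<dots> = (\<Sum>c\<in>CG k l. - (of_int (sign c) * Gf k l f (wr ?d w c)))"
  proof (intro sum.cong refl)
    fix c assume c: "c \<in> CG k l"
    have cp: "c permutes {..<?d}" using c by (rule Gp_permutes)
    have ic: "inv c \<in> CG k l" using c by (rule Gp_inv)
    have s: "sign (c \<circ> kap) = sign c"
      using sign_compose[OF Gp_perm[OF c] Gp_perm[OF kC]] sign_kap by simp
    have cf: "colf l (inv c P) = 0" "colf l (inv c Q) = 1"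
      using ic assms(5-8) unfolding Gp_def by auto
    have lt: "inv c P < ?d" "inv c Q < ?d" using cp assms(5,6) by (auto intro: perm_inv_lt)
    have "Gf k l f (wr ?d (wr ?d w c) kap) = - Gf k l f (wr ?d w c)"
      by (rule K[OF assms(1) wr_words[OF assms(2) cp] assms(3,4) lt cf cfg_wr[OF cp assms(5,6,9)]])
    then show "of_int (sign (c \<circ> kap)) * Gf k l f (wr ?d w (c \<circ> kap)) = - (of_int (sign c) * Gf k l f (wr ?d w c))"
      using s kp by (simp add: wr_wr)
  qed
  also have "\<dots> = - Yf k l f w" by (simp add: Yf_def sum_negf)
  finally show ?thesis by simp
qed

lemma permn: "s permutes {..<(n::nat)} \<Longrightarrow> permutation s"
  using finite_lessThan[of n] permutes_imp_permutation by blast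

lemma sign_sq_c: "(of_int (sign p) :: complex) * of_int (sign p) = 1"
  by (metis of_int_mult sign_idempotent of_int_1)

definition Sset :: "nat \<Rightarrow> nat \<Rightarrow> nat \<Rightarrow> ((nat \<Rightarrow> nat) \<Rightarrow> complex) set" where
  "Sset n k l = {f \<in> weyl_module (conj_part [k, l]) n. \<forall>\<sigma>. \<sigma> permutes {..<n} \<longrightarrow>
        perm_act n (sum_list (conj_part [k, l])) \<sigma> f = tscale (of_int (sign \<sigma>)) f}"

definition Yext :: "nat \<Rightarrow> nat \<Rightarrow> nat \<Rightarrow> ((nat \<Rightarrow> nat) \<Rightarrow> complex) \<Rightarrow> (nat \<Rightarrow> nat) \<Rightarrow> complex" where
  "Yext n k l f = (\<lambda>w. if w \<in> words n (k + l) then Yf k l f w else 0)"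

lemma Yf_double: "Yf k l f w = (\<Sum>c\<in>CG k l. \<Sum>r\<in>RG k l. of_int (sign c) * f (wr (k + l) (wr (k + l) w c) r))"
  by (simp add: Yf_def Gf_def sum_distrib_left)

lemma Yf_cong:
  assumes "w \<in> words n (k + l)" "\<And>v. v \<in> words n (k + l) \<Longrightarrow> f v = g v"
  shows "Yf k l f w = Yf k l g w"
  unfolding Yf_double
  by (intro sum.cong refl) (use assms in \<open>simp add: wr_words Gp_permutes\<close>)

lemma Yf_lin: "Yf k l (\<lambda>v. f v - a * g v) w = Yf k l f w - a * Yf k l g w"
  unfolding Yf_double by (simp add: algebra_simps sum_subtractf sum_distrib_left)

lemma iso_lin: "iso n d f \<Longrightarrow> iso n d g \<Longrightarrow> iso n d (\<lambda>v. f v - a * g v)"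
  unfolding iso_def by (simp add: algebra_simps)

lemma Low:
  assumes "l \<le> k" "iso n (k + l) f"
  shows "Yext n k l f \<in> Sset n k l"
proof -
  let ?d = "k + l"
  define f0 where "f0 v = (if v \<in> words n ?d then f v else 0)" for v
  have f0t: "f0 \<in> tensors n ?d" unfolding tensors_def f0_def by auto
  have "young_sym (conj_part [k, l]) n f0 = Yext n k l f"
  proof (rule ext)
    fix w show "young_sym (conj_part [k, l]) n f0 w = Yext n k l f w"
      unfolding young_sym_kl[OF assms(1)] Yext_def
      using Yf_cong[of w n k l f0 f] by (simp add: f0_def)
  qed
  then have W: "Yext n k l f \<in> weyl_module (conj_part [k, l]) n"
    unfolding weyl_module_def sum_list_kl[OF assms(1)] using f0t by (metis image_eqI)
  have "perm_act n ?d \<sigma> (Yext n k l f) = tscale (of_int (sign \<sigma>)) (Yext n k l f)"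
    if s: "\<sigma> permutes {..<n}" for \<sigma>
  proof (rule ext)
    fix u
    show "perm_act n ?d \<sigma> (Yext n k l f) u = tscale (of_int (sign \<sigma>)) (Yext n k l f) u"
    proof (cases "u \<in> words n ?d")
      case True
      have isg: "inv \<sigma> permutes {..<n}" using s by (rule permutes_inv)
      have "restrict (inv \<sigma> \<circ> u) {..<?d} = vr ?d (inv \<sigma>) u" by (simp add: vr_def)
      moreover have "vr ?d (inv \<sigma>) u \<in> words n ?d" using True isg by (rule vr_words)
      moreover have "Yf k l f (vr ?d (inv \<sigma>) u) = of_int (sign (inv \<sigma>)) * Yf k l f u"
        by (rule Y1[OF assms(2) True isg])
      moreover have "sign (inv \<sigma>) = sign \<sigma>"
        using s by (simp add: sign_inverse permn)
      ultimately show ?thesis using True by (simp add: perm_act_def Yext_def tscale_def)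
    next
      case False
      then show ?thesis by (simp add: perm_act_def Yext_def tscale_def)
    qed
  qed
  then show ?thesis using W unfolding Sset_def sum_list_kl[OF assms(1)] by blast
qed

abbreviation Pn :: "nat \<Rightarrow> (nat \<Rightarrow> nat) set" where
  "Pn n \<equiv> Gp n (\<lambda>_. 0::nat)"

lemma Pn_eq: "Pn n = {p. p permutes {..<n}}"
  by (simp add: Gp_def)

lemma card_Pn: "card (Pn n) = fact n"
  unfolding Pn_eq by (rule card_permutations) auto

lemma Up:
  assumes "l \<le> k" "F \<in> Sset n k l"
  shows "\<exists>f. iso n (k + l) f \<and> F = Yext n k l f"
proof -
  let ?d = "k + l"
  obtain g where g: "g \<in> tensors n ?d" "F = young_sym (conj_part [k, l]) n g"
    using assms(2) unfolding Sset_def weyl_module_def sum_list_kl[OF assms(1)] by blast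
  have Fiso: "perm_act n ?d \<sigma> F = tscale (of_int (sign \<sigma>)) F" if "\<sigma> permutes {..<n}" for \<sigma>
    using assms(2) that unfolding Sset_def sum_list_kl[OF assms(1)] by blast
  define N :: complex where "N = of_nat (fact n)"
  have N0: "N \<noteq> 0" unfolding N_def by simp
  define f where "f v = (\<Sum>\<sigma>\<in>Pn n. of_int (sign \<sigma>) * g (vr ?d (inv \<sigma>) v)) / N" for v
  have iso: "iso n ?d f"
    unfolding iso_def
  proof (intro ballI allI impI)
    fix v t assume v: "v \<in> words n ?d" and t: "t permutes {..<n}"
    have tP: "t \<in> Pn n" using t by (simp add: Pn_eq)
    have "(\<Sum>\<sigma>\<in>Pn n. of_int (sign \<sigma>) * g (vr ?d (inv \<sigma>) (vr ?d t v))) =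
          (\<Sum>\<sigma>\<in>Pn n. of_int (sign (t \<circ> \<sigma>)) * g (vr ?d (inv (t \<circ> \<sigma>)) (vr ?d t v)))"
      by (rule Gp_sum_left[OF tP, symmetric])
    also have "\<dots> = (\<Sum>\<sigma>\<in>Pn n. of_int (sign t) * (of_int (sign \<sigma>) * g (vr ?d (inv \<sigma>) v)))"
    proof (intro sum.cong refl)
      fix \<sigma> assume s: "\<sigma> \<in> Pn n"
      have sp: "\<sigma> permutes {..<n}" using s by (simp add: Pn_eq)
      have "inv (t \<circ> \<sigma>) \<circ> t = inv \<sigma>"
        using t sp by (simp add: o_inv_distrib permutes_bij comp_assoc permutes_inv_o(2))
      then have "vr ?d (inv (t \<circ> \<sigma>)) (vr ?d t v) = vr ?d (inv \<sigma>) v" by (simp add: vr_vr)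
      moreover have "sign (t \<circ> \<sigma>) = sign t * sign \<sigma>"
        using t sp by (simp add: sign_compose permn)
      ultimately show "of_int (sign (t \<circ> \<sigma>)) * g (vr ?d (inv (t \<circ> \<sigma>)) (vr ?d t v)) =
          of_int (sign t) * (of_int (sign \<sigma>) * g (vr ?d (inv \<sigma>) v))" by simp
    qed
    finally show "f (vr ?d t v) = of_int (sign t) * f v"
      unfolding f_def by (simp add: sum_distrib_left)
  qed
  have "F w = Yext n k l f w" for w
  proof (cases "w \<in> words n ?d")
    case False
    then show ?thesis using g(2) by (simp add: young_sym_kl[OF assms(1)] Yext_def)
  next
    case True
    have Fw: "F w' = Yf k l g w'" if "w' \<in> words n ?d" for w'
      using g(2) that by (simp add: young_sym_kl[OF assms(1)])
    have a: "F (vr ?d (inv \<sigma>) w) = of_int (sign \<sigma>) * F w" if s: "\<sigma> \<in> Pn n" for \<sigma>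
    proof -
      have sp: "\<sigma> permutes {..<n}" using s by (simp add: Pn_eq)
      have "perm_act n ?d \<sigma> F w = tscale (of_int (sign \<sigma>)) F w" using Fiso[OF sp] by simp
      then show ?thesis using True by (simp add: perm_act_def tscale_def vr_def)
    qed
    have "N * F w = (\<Sum>\<sigma>\<in>Pn n. of_int (sign \<sigma>) * F (vr ?d (inv \<sigma>) w))"
    proof -
      have "(\<Sum>\<sigma>\<in>Pn n. of_int (sign \<sigma>) * F (vr ?d (inv \<sigma>) w)) = (\<Sum>\<sigma>\<in>Pn n. F w)"
        by (intro sum.cong refl) (simp add: a sign_sq_c mult.assoc[symmetric])
      then show ?thesis by (simp add: N_def card_Pn)
    qed
    also have "\<dots> = (\<Sum>\<sigma>\<in>Pn n. of_int (sign \<sigma>) *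
        (\<Sum>c\<in>CG k l. \<Sum>r\<in>RG k l. of_int (sign c) * g (vr ?d (inv \<sigma>) (wr ?d (wr ?d w c) r))))"
    proof (intro sum.cong refl)
      fix \<sigma> assume s: "\<sigma> \<in> Pn n"
      have isg: "inv \<sigma> permutes {..<n}" using s by (simp add: Pn_eq permutes_inv)
      have "F (vr ?d (inv \<sigma>) w) = Yf k l g (vr ?d (inv \<sigma>) w)" using Fw vr_words[OF True isg] by simp
      also have "\<dots> = (\<Sum>c\<in>CG k l. \<Sum>r\<in>RG k l. of_int (sign c) * g (vr ?d (inv \<sigma>) (wr ?d (wr ?d w c) r)))"
        unfolding Yf_double by (intro sum.cong refl) (simp add: wr_vr Gp_permutes)
      finally show "of_int (sign \<sigma>) * F (vr ?d (inv \<sigma>) w) = of_int (sign \<sigma>) *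
        (\<Sum>c\<in>CG k l. \<Sum>r\<in>RG k l. of_int (sign c) * g (vr ?d (inv \<sigma>) (wr ?d (wr ?d w c) r)))" by simp
    qed
    also have "\<dots> = (\<Sum>c\<in>CG k l. \<Sum>r\<in>RG k l. of_int (sign c) *
        (\<Sum>\<sigma>\<in>Pn n. of_int (sign \<sigma>) * g (vr ?d (inv \<sigma>) (wr ?d (wr ?d w c) r))))"
      by (simp add: sum_distrib_left sum.swap[of _ "Pn n"] mult_ac)
    also have "\<dots> = N * Yf k l f w"
    proof -
      have "Yf k l f w = (\<Sum>c\<in>CG k l. \<Sum>r\<in>RG k l. of_int (sign c) *
        (\<Sum>\<sigma>\<in>Pn n. of_int (sign \<sigma>) * g (vr ?d (inv \<sigma>) (wr ?d (wr ?d w c) r)))) / N"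
        unfolding Yf_double f_def by (simp only: sum_divide_distrib[symmetric] times_divide_eq_right)
      then show ?thesis using N0 by simp
    qed
    finally show ?thesis using N0 True by (simp add: Yext_def)
  qed
  then show ?thesis using iso by blast
qed

lemma VS: "vector_space tscale"
  unfolding vector_space_def tscale_def by (auto simp: fun_eq_iff algebra_simps)

lemma dim_zero:
  assumes "S \<subseteq> {0}"
  shows "vector_space.dim tscale S = 0"
proof (rule vector_space.dim_unique[OF VS, of "{}"])
  show "S \<subseteq> module.span tscale {}" using assms module.span_empty[OF VS[unfolded module_iff_vector_space[symmetric]]] by simp
  show "\<not> module.dependent tscale {}" using VS
    by (metis module.independent_empty module_iff_vector_space)
qed auto

lemma dim_one:
  assumes "F1 \<in> S" "F1 \<noteq> 0" "\<And>F. F \<in> S \<Longrightarrow> \<exists>a. F = tscale a F1"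
  shows "vector_space.dim tscale S = 1"
proof (rule vector_space.dim_unique[OF VS, of "{F1}"])
  have M: "module tscale" using VS by (simp add: module_iff_vector_space)
  show "S \<subseteq> module.span tscale {F1}"
  proof
    fix F assume "F \<in> S"
    then obtain a where "F = tscale a F1" using assms(3) by blast
    then show "F \<in> module.span tscale {F1}"
      using module.span_scale[OF M module.span_base[OF M, of F1 "{F1}"]] by simp
  qed
  show "\<not> module.dependent tscale {F1}"
    using vector_space.dependent_single[OF VS] assms(2) by simp
qed (use assms in auto)

lemma colf_cases: "colf l p = 0 \<or> colf l p = 1"
  unfolding colf_def by auto

definition C0 :: "nat \<Rightarrow> nat \<Rightarrow> nat set" where "C0 k l = {p. p < k + l \<and> colf l p = 0}"
definition C1 :: "nat \<Rightarrow> nat \<Rightarrow> nat set" where "C1 k l = {p. p < k + l \<and> colf l p = 1}"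

lemma C1_eq: "l \<le> k \<Longrightarrow> C1 k l = (\<lambda>i. 2 * i + 1) ` {..<l}"
proof (intro set_eqI iffI)
  fix p assume "l \<le> k" "p \<in> C1 k l"
  then have "p < 2 * l" "p mod 2 = 1" unfolding C1_def colf_def by (auto split: if_splits)
  then have "p = 2 * (p div 2) + 1" "p div 2 < l" by presburger+
  then show "p \<in> (\<lambda>i. 2 * i + 1) ` {..<l}" by blast
next
  fix p assume "l \<le> k" "p \<in> (\<lambda>i. 2 * i + 1) ` {..<l}"
  then show "p \<in> C1 k l" unfolding C1_def colf_def by auto
qed

lemma card_C1: "l \<le> k \<Longrightarrow> card (C1 k l) = l"
  by (simp add: C1_eq card_image inj_on_def)

lemma C01_un: "C0 k l \<union> C1 k l = {..<k + l}"
  unfolding C0_def C1_def using colf_cases by auto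

lemma C01_int: "C0 k l \<inter> C1 k l = {}"
  unfolding C0_def C1_def by auto

lemma card_C0: "l \<le> k \<Longrightarrow> card (C0 k l) = k"
proof -
  have "card (C0 k l) + card (C1 k l) = k + l"
    using card_Un_disjoint[of "C0 k l" "C1 k l"] C01_un[of k l] C01_int[of k l]
    by (simp add: C0_def C1_def)
  then show "l \<le> k \<Longrightarrow> ?thesis" using card_C1 by simp
qed

lemma two_missing:
  assumes "X \<subseteq> {..<n}" "card X + 2 \<le> n"
  shows "\<exists>a b. a \<noteq> b \<and> a < n \<and> b < n \<and> a \<notin> X \<and> b \<notin> X"
proof -
  have fX: "finite X" using assms(1) finite_subset by blast
  have "card ({..<n} - X) = n - card X" using assms(1) fX by (simp add: card_Diff_subset)
  then have c: "card ({..<n} - X) \<ge> 2" using assms(2) by simp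
  then obtain a where a: "a \<in> {..<n} - X" by (metis card.empty ex_in_conv not_numeral_le_zero)
  have "card ({..<n} - X - {a}) \<ge> 1" using c a by (simp add: card_Diff_singleton)
  then obtain b where b: "b \<in> {..<n} - X - {a}" by (metis card.empty ex_in_conv not_one_le_zero)
  show ?thesis using a b by blast
qed

lemma Zall:
  assumes iso: "iso n (k + l) f" and w: "w \<in> words n (k + l)" and lk: "l \<le> k" and kn: "k \<le> n"
    and notin: "(k, l) \<notin> {(n - 1, 0), (n, 0), (n - 1, 1), (n, 1)}"
  shows "Yf k l f w = 0"
proof -
  let ?d = "k + l"
  let ?A = "w ` C0 k l" and ?B = "w ` C1 k l"
  show ?thesis
  proof (cases "inj_on w (C0 k l) \<and> inj_on w (C1 k l)")
    case False
    then obtain p q where pq: "p \<noteq> q" "p < ?d" "q < ?d" "colf l p = colf l q" "w p = w q"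
      unfolding inj_on_def C0_def C1_def by auto
    show ?thesis by (rule Z1[OF w pq])
  next
    case True
    then have inj0: "inj_on w (C0 k l)" and inj1: "inj_on w (C1 k l)" by auto
    have cA: "card ?A = k" using inj0 card_C0[OF lk] by (simp add: card_image)
    have cB: "card ?B = l" using inj1 card_C1[OF lk] by (simp add: card_image)
    have fA: "finite ?A" "finite ?B" unfolding C0_def C1_def by auto
    have AB: "?A \<union> ?B = w ` {..<?d}" using C01_un[of k l] by (metis image_Un)
    have ABn: "?A \<union> ?B \<subseteq> {..<n}" unfolding AB using words_D[OF w] by auto
    have cU: "card (?A \<union> ?B) + card (?A \<inter> ?B) = k + l"
      using card_Un_Int[OF fA] cA cB by simp
    have colw: "\<And>j. j < ?d \<Longrightarrow> j \<in> C0 k l \<or> j \<in> C1 k l" using C01_un by auto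
    show ?thesis
    proof (cases "card (?A \<inter> ?B) \<ge> 2")
      case True
      then obtain a where a: "a \<in> ?A \<inter> ?B" by (metis card.empty ex_in_conv not_numeral_le_zero)
      have "card (?A \<inter> ?B - {a}) \<ge> 1" using True a fA by (simp add: card_Diff_singleton)
      then obtain b where b: "b \<in> ?A \<inter> ?B - {a}" by (metis card.empty ex_in_conv not_one_le_zero)
      from a obtain P where P: "P \<in> C0 k l" "w P = a" by (metis IntE imageE)
      from a obtain Q where Q: "Q \<in> C1 k l" "w Q = a" by (metis IntE imageE)
      from b obtain P' where P': "P' \<in> C0 k l" "w P' = b" by (metis DiffE IntE imageE)
      from b obtain Q' where Q': "Q' \<in> C1 k l" "w Q' = b" by (metis DiffE IntE imageE)
      note PQ = P(1) Q(1) P'(1) Q'(1) P(2) Q(2) P'(2) Q'(2)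
      have occ: "j = P \<or> j = Q" if "j < ?d" "w j = a" for j
        using colw[OF that(1)] inj_onD[OF inj0, of j P] inj_onD[OF inj1, of j Q] PQ that by auto
      have occ': "j = P' \<or> j = Q'" if "j < ?d" "w j = b" for j
        using colw[OF that(1)] inj_onD[OF inj0, of j P'] inj_onD[OF inj1, of j Q'] PQ that by auto
      have ab: "a \<noteq> b" using b by blast
      have PP: "P \<noteq> P'" "Q \<noteq> Q'" using PQ ab by auto
      have lt: "P < ?d" "P' < ?d" "Q < ?d" "Q' < ?d" using PQ(1-4) by (auto simp: C0_def C1_def)
      have cl: "colf l P = 0" "colf l P' = 0" "colf l Q = 1" "colf l Q' = 1"
        using PQ(1-4) by (auto simp: C0_def C1_def)
      show ?thesis
        by (rule Z3[OF iso w PP(1,2) lt(1,2,3,4) cl PQ(5-8) ab occ occ'])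
    next
      case False
      then have c1: "card (?A \<inter> ?B) \<le> 1" by simp
      show ?thesis
      proof (cases "card (?A \<union> ?B) + 2 \<le> n")
        case True
        obtain a b where ab: "a \<noteq> b" "a < n" "b < n" "a \<notin> ?A \<union> ?B" "b \<notin> ?A \<union> ?B"
          using two_missing[OF ABn True] by blast
        show ?thesis
          by (rule Z2[OF iso w ab(1-3)]) (use ab AB in auto)
      next
        case False
        then have big: "card (?A \<union> ?B) + 1 \<ge> n" by simp
        show ?thesis
        proof (cases "card (?A \<inter> ?B) = 0")
          case True
          then have dis: "?A \<inter> ?B = {}" using fA by simp
          have injd: "inj_on w {..<?d}"
          proof (rule inj_onI)
            fix x y assume xy: "x \<in> {..<?d}" "y \<in> {..<?d}" "w x = w y"
            have xd: "x < ?d" "y < ?d" using xy by auto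
            show "x = y"
            proof (cases "x \<in> C0 k l")
              case True
              show ?thesis
              proof (cases "y \<in> C0 k l")
                case True then show ?thesis using \<open>x \<in> C0 k l\<close> inj_onD[OF inj0] xy by blast
              next
                case False
                then have "y \<in> C1 k l" using colw[OF xd(2)] by blast
                then have "w x \<in> ?A \<inter> ?B" using \<open>x \<in> C0 k l\<close> xy(3) by (metis IntI image_eqI)
                then show ?thesis using dis by blast
              qed
            next
              case False
              then have x1: "x \<in> C1 k l" using colw[OF xd(1)] by blast
              show ?thesis
              proof (cases "y \<in> C1 k l")
                case True then show ?thesis using x1 inj_onD[OF inj1] xy by blast
              next
                case False
                then have "y \<in> C0 k l" using colw[OF xd(2)] by blast
                then have "w x \<in> ?A \<inter> ?B" using x1 xy(3) by (metis IntI image_eqI)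
                then show ?thesis using dis by blast
              qed
            qed
          qed
          show ?thesis
          proof (cases "l = 0")
            case True
            then have "k = n - 1 \<or> k = n" using big cU \<open>card (?A \<inter> ?B) = 0\<close> kn by auto
            then show ?thesis using notin True by auto
          next
            case False
            show ?thesis by (rule Z4[OF iso w _ lk injd]) (use False in simp)
          qed
        next
          case False
          then have one: "card (?A \<inter> ?B) = 1" using c1 by simp
          then obtain x where x: "?A \<inter> ?B = {x}" using card_1_singletonE by blast
          have l1: "l \<ge> 1" using x cB fA(2) by (cases l) auto
          show ?thesis
          proof (cases "l = 1")
            case True
            then have "k = n - 1 \<or> k = n" using big cU one kn by auto
            then show ?thesis using notin True by auto
          next
            case False
            then have l2: "2 \<le> l" using l1 by simp
            have xA: "x \<in> ?A" and xB: "x \<in> ?B" using x by auto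
            obtain P where P: "P \<in> C0 k l" "w P = x" using xA by (metis imageE)
            obtain Q where Q: "Q \<in> C1 k l" "w Q = x" using xB by (metis imageE)
            note PQ = P(1) Q(1) P(2) Q(2)
            have cfg: "cfg ?d w P Q"
              unfolding cfg_def uniq_def
            proof (intro conjI allI impI)
              show "w P = w Q" using PQ by simp
              fix j i assume j: "j < ?d" "j \<noteq> P \<and> j \<noteq> Q" and i: "i < ?d" "w i = w j"
              show "i = j"
              proof (rule ccontr)
                assume ij: "i \<noteq> j"
                have jd: "j < ?d" "i < ?d" using i j by auto
                have n0: "\<not> (i \<in> C0 k l \<and> j \<in> C0 k l)" using ij i inj_onD[OF inj0, of i j] by blast
                have n1: "\<not> (i \<in> C1 k l \<and> j \<in> C1 k l)" using ij i inj_onD[OF inj1, of i j] by blast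
                have "w j \<in> ?A \<inter> ?B"
                proof (cases "j \<in> C0 k l")
                  case True
                  then have "i \<in> C1 k l" using n0 colw[OF jd(2)] by blast
                  then have "w i \<in> ?B" by blast
                  then show ?thesis using True i by (metis IntI image_eqI)
                next
                  case False
                  then have j1: "j \<in> C1 k l" using colw[OF jd(1)] by blast
                  then have "i \<in> C0 k l" using n1 colw[OF jd(2)] by blast
                  then have "w i \<in> ?A" by blast
                  then show ?thesis using j1 i by (metis IntI image_eqI)
                qed
                then have wj: "w j = x" using x by auto
                show False
                proof (cases "j \<in> C0 k l")
                  case True then show False using inj_onD[OF inj0, of j P] wj PQ j by auto
                next
                  case False
                  then have "j \<in> C1 k l" using colw[OF jd(1)] by blast
                  then show False using inj_onD[OF inj1, of j Q] wj PQ j by auto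
                qed
              qed
            qed
            show ?thesis
            proof (rule Z5[OF iso w l2 lk _ _ _ _ cfg])
              show "P < ?d" "colf l P = 0" using PQ(1) by (auto simp: C0_def)
              show "Q < ?d" "colf l Q = 1" using PQ(2) by (auto simp: C1_def)
            qed
          qed
        qed
      qed
    qed
  qed
qed

lemma Ext:
  fixes u v :: "nat \<Rightarrow> nat" and n :: nat
  assumes fin: "finite A" and iu: "inj_on u A" and iv: "inj_on v A"
    and un: "u ` A \<subseteq> {..<n}" and vn: "v ` A \<subseteq> {..<n}"
  shows "\<exists>t. t permutes {..<n} \<and> (\<forall>j\<in>A. t (u j) = v j)"
proof -
  let ?X = "u ` A" and ?Y = "v ` A"
  define g where "g = v \<circ> inv_into A u"
  have gX: "g x \<in> ?Y" if "x \<in> ?X" for x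
    using that unfolding g_def by (auto simp: inv_into_into)
  have gu: "g (u j) = v j" if "j \<in> A" for j
    using that iu unfolding g_def by simp
  have ig: "inj_on g ?X"
  proof (rule inj_onI)
    fix x y assume xy: "x \<in> ?X" "y \<in> ?X" "g x = g y"
    then obtain a b where ab: "a \<in> A" "b \<in> A" "x = u a" "y = u b" by blast
    then have "v a = v b" using xy gu by simp
    then have "a = b" using iv ab inj_onD by metis
    then show "x = y" using ab by simp
  qed
  have cX: "card ?X = card ?Y" using iu iv by (simp add: card_image)
  have "card ({..<n} - ?X) = card ({..<n} - ?Y)"
    using un vn cX fin by (simp add: card_Diff_subset)
  then have "\<exists>h. bij_betw h ({..<n} - ?X) ({..<n} - ?Y)"
    by (rule finite_same_card_bij[OF finite_Diff[OF finite_lessThan] finite_Diff[OF finite_lessThan]])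
  then obtain h where h: "bij_betw h ({..<n} - ?X) ({..<n} - ?Y)" by (elim exE)
  define t where "t x = (if x \<in> ?X then g x else if x < n then h x else x)" for x
  have "t permutes {..<n}"
  proof (rule inj_imp_permutes)
    show "inj_on t {..<n}"
    proof (rule inj_onI)
      fix x y assume x: "x \<in> {..<n}" and y: "y \<in> {..<n}" and e: "t x = t y"
      show "x = y"
      proof (cases "x \<in> ?X")
        case True
        show ?thesis
        proof (cases "y \<in> ?X")
          case True
          then have "g x = g y" using \<open>x \<in> ?X\<close> e by (simp add: t_def)
          then show ?thesis using inj_onD[OF ig] \<open>x \<in> ?X\<close> True by blast
        next
          case False
          then have "h y \<in> {..<n} - ?Y" using h y by (auto simp: bij_betw_def)
          moreover have "g x \<in> ?Y" using gX True by blast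
          ultimately show ?thesis using e True False y by (simp add: t_def)
        qed
      next
        case False
        show ?thesis
        proof (cases "y \<in> ?X")
          case True
          then have "h x \<in> {..<n} - ?Y" using h x False by (auto simp: bij_betw_def)
          moreover have "g y \<in> ?Y" using gX True by blast
          ultimately show ?thesis using e True False x by (simp add: t_def)
        next
          case F2: False
          then show ?thesis using False e h x y by (simp add: t_def bij_betw_def inj_on_def)
        qed
      qed
    qed
    show "finite {..<n}" by simp
    show "t x \<in> {..<n}" if "x \<in> {..<n}" for x
    proof (cases "x \<in> ?X")
      case True then show ?thesis using gX vn by (auto simp: t_def)
    next
      case False then have "h x \<in> {..<n} - ?Y" using h that by (auto simp: bij_betw_def)
      then show ?thesis using False that by (simp add: t_def)
    qed
    show "t i = i" if "i \<notin> {..<n}" for i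
      using that un by (auto simp: t_def)
  qed
  moreover have "\<forall>j\<in>A. t (u j) = v j" using gu by (simp add: t_def)
  ultimately show ?thesis by blast
qed

definition prj :: "nat \<Rightarrow> nat \<Rightarrow> ((nat \<Rightarrow> nat) \<Rightarrow> complex) \<Rightarrow> (nat \<Rightarrow> nat) \<Rightarrow> complex" where
  "prj n d g v = (\<Sum>\<sigma>\<in>Pn n. of_int (sign \<sigma>) * g (vr d (inv \<sigma>) v))"

lemma iso_prj: "iso n d (prj n d g)"
  unfolding iso_def
proof (intro ballI allI impI)
  fix v t assume v: "v \<in> words n d" and t: "t permutes {..<n}"
  have tP: "t \<in> Pn n" using t by (simp add: Pn_eq)
  have "(\<Sum>\<sigma>\<in>Pn n. of_int (sign \<sigma>) * g (vr d (inv \<sigma>) (vr d t v))) =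
        (\<Sum>\<sigma>\<in>Pn n. of_int (sign (t \<circ> \<sigma>)) * g (vr d (inv (t \<circ> \<sigma>)) (vr d t v)))"
    by (rule Gp_sum_left[OF tP, symmetric])
  also have "\<dots> = (\<Sum>\<sigma>\<in>Pn n. of_int (sign t) * (of_int (sign \<sigma>) * g (vr d (inv \<sigma>) v)))"
  proof (intro sum.cong refl)
    fix \<sigma> assume s: "\<sigma> \<in> Pn n"
    have sp: "\<sigma> permutes {..<n}" using s by (simp add: Pn_eq)
    have "inv (t \<circ> \<sigma>) \<circ> t = inv \<sigma>"
      using t sp by (simp add: o_inv_distrib permutes_bij comp_assoc permutes_inv_o(2))
    then have "vr d (inv (t \<circ> \<sigma>)) (vr d t v) = vr d (inv \<sigma>) v" by (simp add: vr_vr)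
    moreover have "sign (t \<circ> \<sigma>) = sign t * sign \<sigma>"
      using t sp by (simp add: sign_compose permn)
    ultimately show "of_int (sign (t \<circ> \<sigma>)) * g (vr d (inv (t \<circ> \<sigma>)) (vr d t v)) =
        of_int (sign t) * (of_int (sign \<sigma>) * g (vr d (inv \<sigma>) v))" by simp
  qed
  finally show "prj n d g (vr d t v) = of_int (sign t) * prj n d g v"
    unfolding prj_def by (simp add: sum_distrib_left)
qed

lemma vr_id: "w \<in> words n d \<Longrightarrow> vr d id w = w"
  by (rule words_eqI[of _ n d]) (auto simp: vr_def words_memI words_D)

lemma stab:
  assumes w0: "w0 \<in> words n d" and c: "n \<le> card (w0 ` {..<d}) + 1"
    and r: "r permutes {..<n}" and e: "vr d r w0 = w0"
  shows "r = id"
proof -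
  let ?X = "w0 ` {..<d}"
  have Xn: "?X \<subseteq> {..<n}" using words_D[OF w0] by auto
  have fx: "r x = x" if xX: "x \<in> ?X" for x
  proof -
    obtain j where j: "j < d" "x = w0 j" using xX by blast
    have "vr d r w0 j = w0 j" using e by simp
    then show ?thesis using j by simp
  qed
  have cd: "card ({..<n} - ?X) \<le> 1" using Xn c by (simp add: card_Diff_subset)
  have "r y = y" for y
  proof (cases "y < n")
    case False then show ?thesis using r perm_ge by blast
  next
    case True
    show ?thesis
    proof (cases "y \<in> ?X")
      case True then show ?thesis by (rule fx)
    next
      case False
      have ry: "r y < n" using r True by (rule perm_lt)
      have "r y \<notin> ?X"
      proof
        assume "r y \<in> ?X"
        then have "r (r y) = r y" by (rule fx)
        then have "r y = y" using r by (metis permutes_inj injD)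
        then show False using False \<open>r y \<in> ?X\<close> by simp
      qed
      then have "r y \<in> {..<n} - ?X" "y \<in> {..<n} - ?X" using ry True False by auto
      then show ?thesis using cd card_le_Suc0_iff_eq[of "{..<n} - ?X"] by auto
    qed
  qed
  then show ?thesis by auto
qed

definition dlt :: "(nat \<Rightarrow> nat) \<Rightarrow> (nat \<Rightarrow> nat) \<Rightarrow> complex" where
  "dlt w0 v = (if v = w0 then 1 else 0)"

lemma prj_dlt_w0:
  assumes w0: "w0 \<in> words n d" and c: "n \<le> card (w0 ` {..<d}) + 1"
  shows "prj n d (dlt w0) w0 = 1"
proof -
  have "prj n d (dlt w0) w0 = (\<Sum>\<sigma>\<in>Pn n. if \<sigma> = id then 1 else 0)"
    unfolding prj_def
  proof (intro sum.cong refl)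
    fix \<sigma> assume s: "\<sigma> \<in> Pn n"
    have sp: "\<sigma> permutes {..<n}" using s by (simp add: Pn_eq)
    show "of_int (sign \<sigma>) * dlt w0 (vr d (inv \<sigma>) w0) = (if \<sigma> = id then 1 else 0)"
    proof (cases "vr d (inv \<sigma>) w0 = w0")
      case True
      then have "inv \<sigma> = id" using stab[OF w0 c permutes_inv[OF sp]] by simp
      then have "\<sigma> = id" using sp by (metis inv_id permutes_inv_inv)
      then show ?thesis using vr_id[OF w0] by (simp add: dlt_def)
    next
      case False
      have "\<sigma> \<noteq> id"
      proof
        assume "\<sigma> = id"
        then have "inv \<sigma> = id" by simp
        then show False using False vr_id[OF w0] by simp
      qed
      then show ?thesis using False by (simp add: dlt_def)
    qed
  qed
  also have "\<dots> = 1" using Gp_id[of n "\<lambda>_. 0"] Gp_fin[of n "\<lambda>_. 0"] by simp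
  finally show ?thesis .
qed

lemma prj_dlt_zero:
  assumes "\<And>\<sigma>. \<sigma> permutes {..<n} \<Longrightarrow> vr d \<sigma> v \<noteq> w0"
  shows "prj n d (dlt w0) v = 0"
  unfolding prj_def
  by (rule sum.neutral) (use assms in \<open>auto simp: dlt_def Pn_eq permutes_inv\<close>)

lemma RG0_id:
  assumes "l = 0" "r \<in> RG k l" "u \<in> words n (k + l)"
  shows "wr (k + l) u r = u"
proof (rule words_eqI[of _ n "k + l"])
  show "wr (k + l) u r \<in> words n (k + l)" using assms(3) Gp_permutes[OF assms(2)] by (rule wr_words)
  show "u \<in> words n (k + l)" by (fact assms(3))
  fix i assume i: "i < k + l"
  have "rowf l (r i) = rowf l i" using assms(2) i by (simp add: Gp_def)
  then have "r i = i" using assms(1) by (simp add: rowf_def)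
  then show "wr (k + l) u r i = u i" using i by simp
qed

definition w00 :: "nat \<Rightarrow> nat \<Rightarrow> nat" where
  "w00 k = restrict (\<lambda>i. i) {..<k}"

lemma w00_words: "k \<le> n \<Longrightarrow> w00 k \<in> words n k"
  by (rule words_memI) (auto simp: w00_def)

lemma case0_up:
  assumes l0: "l = 0" and kn: "k \<le> n" and iso: "iso n (k + l) f"
    and y0: "Yf k l f (w00 k) = 0" and w: "w \<in> words n (k + l)"
  shows "Yf k l f w = 0"
proof (cases "inj_on w {..<k}")
  case False
  then obtain p q where pq: "p \<noteq> q" "p < k" "q < k" "w p = w q" unfolding inj_on_def by auto
  show ?thesis by (rule Z1[OF w pq(1)]) (use pq l0 in \<open>auto simp: colf_def\<close>)
next
  case True
  have w0: "w00 k \<in> words n (k + l)" using w00_words[OF kn] l0 by simp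
  have "inj_on (w00 k) {..<k}" by (auto simp: w00_def inj_on_def)
  moreover have "w00 k ` {..<k} \<subseteq> {..<n}" using kn by (auto simp: w00_def)
  moreover have "w ` {..<k} \<subseteq> {..<n}" using words_D[OF w] l0 by auto
  ultimately obtain t where t: "t permutes {..<n}" "\<forall>j\<in>{..<k}. t (w00 k j) = w j"
    using Ext[of "{..<k}" "w00 k" w n] True by blast
  have "vr (k + l) t (w00 k) = w"
    by (rule words_eqI[OF vr_words[OF w0 t(1)] w]) (use t(2) l0 in auto)
  then show ?thesis using Y1[OF iso w0 t(1)] y0 by simp
qed

lemma case0_low:
  assumes l0: "l = 0" and kn: "k \<le> n" and nk: "n \<le> k + 1"
  shows "Yf k l (prj n (k + l) (dlt (w00 k))) (w00 k) \<noteq> 0"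
proof -
  let ?f = "prj n (k + l) (dlt (w00 k))"
  have w0: "w00 k \<in> words n (k + l)" using w00_words[OF kn] l0 by simp
  have cw: "card (w00 k ` {..<k + l}) = k"
  proof -
    have "w00 k ` {..<k + l} = {..<k}" using l0 by (auto simp: w00_def)
    then show ?thesis by simp
  qed
  have f0: "?f (w00 k) = 1" by (rule prj_dlt_w0[OF w0]) (use cw nk in simp)
  have iso: "iso n (k + l) ?f" by (rule iso_prj)
  have G: "Gf k l ?f (wr (k + l) (w00 k) c) = of_nat (card (RG k l)) * of_int (sign c)"
    if c: "c \<in> CG k l" for c
  proof -
    have cp: "c permutes {..<k + l}" using c by (rule Gp_permutes)
    have cn: "c permutes {..<n}" using permutes_subset[OF cp] kn l0 by auto
    have e: "wr (k + l) (w00 k) c = vr (k + l) c (w00 k)"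
      using cp l0 by (auto simp: wr_def vr_def w00_def fun_eq_iff perm_lt)
    have v: "?f (vr (k + l) c (w00 k)) = of_int (sign c)"
      using iso w0 cn f0 unfolding iso_def by simp
    have "Gf k l ?f (wr (k + l) (w00 k) c) = (\<Sum>r\<in>RG k l. of_int (sign c))"
      unfolding Gf_def
    proof (intro sum.cong refl)
      fix r assume r: "r \<in> RG k l"
      have "wr (k + l) (wr (k + l) (w00 k) c) r = wr (k + l) (w00 k) c"
        by (rule RG0_id[OF l0 r wr_words[OF w0 cp]])
      then show "?f (wr (k + l) (wr (k + l) (w00 k) c) r) = of_int (sign c)" using e v by simp
    qed
    then show ?thesis by simp
  qed
  have "Yf k l ?f (w00 k) = (\<Sum>c\<in>CG k l. of_nat (card (RG k l)))"
    unfolding Yf_def using G by (simp add: sign_sq_c mult.left_commute[of "of_int (sign _)"])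
  also have "\<dots> = of_nat (card (CG k l) * card (RG k l))" by simp
  finally have "Yf k l ?f (w00 k) = of_nat (card (CG k l) * card (RG k l))" .
  moreover have "card (CG k l) > 0" "card (RG k l) > 0"
    using Gp_id Gp_fin card_gt_0_iff by blast+
  ultimately show ?thesis by simp
qed

definition w01 :: "nat \<Rightarrow> nat \<Rightarrow> nat" where
  "w01 k = restrict (\<lambda>j. if j \<le> 1 then 0 else j - 1) {..<k + 1}"

lemma w01_apply: "j < k + 1 \<Longrightarrow> w01 k j = (if j \<le> 1 then 0 else j - 1)"
  by (simp add: w01_def)

lemma w01_words: "k \<le> n \<Longrightarrow> 1 \<le> k \<Longrightarrow> w01 k \<in> words n (k + 1)"
  by (rule words_memI) (auto simp: w01_def)

lemma C0_1: "C0 k 1 = {..<k + 1} - {1}"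
  unfolding C0_def colf_def by auto

lemma w01_inj: "inj_on (w01 k) (C0 k 1)"
  unfolding C0_1 by (rule inj_onI) (auto simp: w01_apply split: if_splits)

lemma w01_img: "1 \<le> k \<Longrightarrow> w01 k ` {..<k + 1} = {..<k}"
proof (intro set_eqI iffI)
  fix x assume "x \<in> w01 k ` {..<k + 1}" "1 \<le> k"
  then show "x \<in> {..<k}" by (auto simp: w01_apply)
next
  fix x assume x: "x \<in> {..<k}" "1 \<le> k"
  show "x \<in> w01 k ` {..<k + 1}"
  proof (cases "x = 0")
    case True then show ?thesis using x by (intro image_eqI[of _ _ 0]) (auto simp: w01_apply)
  next
    case False then show ?thesis using x by (intro image_eqI[of _ _ "x + 1"]) (auto simp: w01_apply)
  qed
qed

lemma w01_imgC0: "1 \<le> k \<Longrightarrow> w01 k ` C0 k 1 \<subseteq> {..<k}"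
  using w01_img unfolding C0_1 by auto

lemma CG1_fix1:
  assumes "c \<in> CG k 1"
  shows "c 1 = 1"
proof -
  have "1 < k + 1 \<or> k = 0" by auto
  then show ?thesis
  proof
    assume l: "1 < k + 1"
    have "colf 1 (c 1) = colf 1 1" using assms l by (simp add: Gp_def)
    moreover have "c 1 < k + 1" using Gp_permutes[OF assms] l by (rule perm_lt)
    ultimately show ?thesis by (auto simp: colf_def split: if_splits)
  next
    assume "k = 0"
    then show ?thesis using Gp_permutes[OF assms] perm_ge by auto
  qed
qed

lemma case1_up:
  assumes l1: "l = 1" and kn: "k \<le> n" and k1: "1 \<le> k" and iso: "iso n (k + l) f"
    and y0: "Yf k l f (w01 k) = 0" and w: "w \<in> words n (k + l)"
  shows "Yf k l f w = 0"
proof -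
  let ?d = "k + l"
  have w0: "w01 k \<in> words n ?d" using w01_words[OF kn k1] l1 by simp
  have C0d: "C0 k l = {..<?d} - {1}" using C0_1 l1 by simp
  show ?thesis
  proof (cases "inj_on w (C0 k l)")
    case False
    then obtain p q where pq: "p \<noteq> q" "p \<in> C0 k l" "q \<in> C0 k l" "w p = w q" unfolding inj_on_def by auto
    show ?thesis by (rule Z1[OF w pq(1)]) (use pq in \<open>auto simp: C0_def\<close>)
  next
    case inj0: True
    show ?thesis
    proof (cases "w 1 \<in> w ` C0 k l")
      case False
      have injd: "inj_on w {..<?d}"
      proof (rule inj_onI)
        fix x y assume xy: "x \<in> {..<?d}" "y \<in> {..<?d}" "w x = w y"
        show "x = y"
        proof (cases "x = 1 \<or> y = 1")
          case True
          then show ?thesis using False xy C0d by (metis Diff_iff image_eqI singletonD)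
        next
          case False
          then show ?thesis using inj_onD[OF inj0] xy C0d by auto
        qed
      qed
      show ?thesis by (rule Z4[OF iso w _ _ injd]) (use l1 k1 in auto)
    next
      case True
      then obtain p where p: "p \<in> C0 k l" "w 1 = w p" by (metis imageE)
      have pd: "p < ?d" "p \<noteq> 1" using p C0d by auto
      let ?c = "Transposition.transpose 0 p"
      have cC: "?c \<in> CG k l" by (rule Gp_transpose) (use pd l1 in \<open>auto simp: colf_def\<close>)
      have cp: "?c permutes {..<?d}" using cC by (rule Gp_permutes)
      let ?u = "wr ?d w ?c"
      have u: "?u \<in> words n ?d" using w cp by (rule wr_words)
      have cC0: "?c j \<in> C0 k l" if "j \<in> C0 k l" for j
        using that pd C0d k1 by (auto simp: transpose_def)
      have injc: "inj_on ?u (C0 k l)"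
      proof (rule inj_onI)
        fix x y assume xy: "x \<in> C0 k l" "y \<in> C0 k l" "?u x = ?u y"
        then have "w (?c x) = w (?c y)" using C0d by (simp add: wr_def)
        then have "?c x = ?c y" using inj_onD[OF inj0] cC0 xy by blast
        then show "x = y" using permutes_inj[OF cp] by (meson injD)
      qed
      have imgs: "w01 k ` C0 k l \<subseteq> {..<n}" "?u ` C0 k l \<subseteq> {..<n}"
        using w01_imgC0[OF k1] kn l1 words_D[OF u] C0d by auto
      obtain t where t: "t permutes {..<n}" "\<forall>j\<in>C0 k l. t (w01 k j) = ?u j"
      proof -
        have inj01: "inj_on (w01 k) (C0 k l)" using w01_inj[of k] l1 by simp
        have fin: "finite (C0 k l)" using C0d by simp
        show ?thesis using Ext[OF fin inj01 injc imgs] that by blast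
      qed
      have "vr ?d t (w01 k) = ?u"
      proof (rule words_eqI[OF vr_words[OF w0 t(1)] u])
        fix j assume j: "j < ?d"
        show "vr ?d t (w01 k) j = ?u j"
        proof (cases "j = 1")
          case False then show ?thesis using t(2) j C0d by auto
        next
          case True
          have "0 \<in> C0 k l" using C0d k1 by auto
          then have "t (w01 k 0) = ?u 0" using t(2) by blast
          moreover have "w01 k 1 = w01 k 0" "?u 0 = w p" "?u 1 = w 1"
            using pd j True l1 by (auto simp: w01_apply transpose_def)
          ultimately show ?thesis using True j p(2) by simp
        qed
      qed
      then have "Yf k l f ?u = 0" using Y1[OF iso w0 t(1)] y0 by simp
      then have "of_int (sign ?c) * Yf k l f w = 0" using Y2[OF cC] by simp
      then show ?thesis by simp
    qed
  qed
qed

lemma RG1_big: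
  assumes "r \<in> RG k 1" "x < k + 1" "2 \<le> x"
  shows "r x = x"
proof -
  have "rowf 1 (r x) = rowf 1 x" using assms by (simp add: Gp_def)
  then show ?thesis using assms(3) by (auto simp: rowf_def split: if_splits)
qed

lemma RG1_small:
  assumes "r \<in> RG k 1" "x < k + 1" "x < 2"
  shows "r x < 2"
proof -
  have "rowf 1 (r x) = rowf 1 x" using assms by (simp add: Gp_def)
  then show ?thesis using assms(3) by (auto simp: rowf_def split: if_splits)
qed

lemma permutes_C0_1:
  assumes "c \<in> CG k 1"
  shows "c permutes C0 k 1"
proof -
  have cp: "c permutes {..<k + 1}" using assms by (rule Gp_permutes)
  have "\<forall>x. x \<notin> C0 k 1 \<longrightarrow> c x = x"
    using CG1_fix1[OF assms] perm_ge[OF cp] unfolding C0_1 by auto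
  moreover have "\<forall>y. \<exists>!x. c x = y" using cp unfolding permutes_def by blast
  ultimately show ?thesis unfolding permutes_def by blast
qed

lemma C0_1_mem: "j < k + 1 \<Longrightarrow> j \<noteq> 1 \<Longrightarrow> j \<in> C0 k 1"
  unfolding C0_1 by simp

lemma case1_term:
  assumes l1: "l = 1" and kn: "k \<le> n" and k1: "1 \<le> k" and nk: "n \<le> k + 1"
    and c: "c \<in> CG k l" and r: "r \<in> RG k l"
  shows "of_int (sign c) * prj n (k + l) (dlt (w01 k)) (wr (k + l) (wr (k + l) (w01 k) c) r)
       = (if c 0 = 0 then 1 else 0)"
proof -
  let ?d = "k + l"
  let ?f = "prj n ?d (dlt (w01 k))"
  have w0: "w01 k \<in> words n ?d" using w01_words[OF kn k1] l1 by simp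
  have cp: "c permutes {..<?d}" using c by (rule Gp_permutes)
  have rp: "r permutes {..<?d}" using r by (rule Gp_permutes)
  have c1: "c 1 = 1" using CG1_fix1 c l1 by simp
  have f0: "?f (w01 k) = 1"
    by (rule prj_dlt_w0[OF w0]) (use w01_img[OF k1] nk l1 in simp)
  have iso: "iso n ?d ?f" by (rule iso_prj)
  have rb: "r x = x" if "x < ?d" "2 \<le> x" for x using RG1_big r that l1 by simp
  have rs: "r x < 2" if "x < 2" for x using RG1_small[of r k x] r that l1 k1 by simp
  show ?thesis
  proof (cases "c 0 = 0")
    case True
    have e1: "wr ?d (wr ?d (w01 k) c) r = wr ?d (w01 k) c"
    proof (rule ext)
      fix j
      show "wr ?d (wr ?d (w01 k) c) r j = wr ?d (w01 k) c j"
      proof (cases "j < ?d")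
        case False then show ?thesis by (simp add: wr_def)
      next
        case jd: True
        show ?thesis
        proof (cases "j < 2")
          case True
          then have "r j < 2" by (rule rs)
          then have "r j = 0 \<or> r j = 1" by auto
          moreover have "j = 0 \<or> j = 1" using True by auto
          ultimately have "c (r j) \<le> 1" "c j \<le> 1" using \<open>c 0 = 0\<close> c1 by auto
          moreover have "r j < ?d" using perm_lt[OF rp jd] .
          moreover have "c (r j) < ?d" "c j < ?d" using perm_lt[OF cp] jd \<open>r j < ?d\<close> by auto
          ultimately show ?thesis using jd l1 by (simp add: w01_apply)
        next
          case False
          then show ?thesis using rb jd by simp
        qed
      qed
    qed
    let ?t = "map_permutation (C0 k 1) (w01 k) c"
    have pc: "c permutes C0 k 1" using permutes_C0_1 c l1 by simp
    have bij: "bij_betw (w01 k) (C0 k 1) (w01 k ` C0 k 1)" using w01_inj by (simp add: bij_betw_def)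
    have tp0: "?t permutes w01 k ` C0 k 1" by (rule map_permutation_permutes[OF bij pc])
    have sub: "w01 k ` C0 k 1 \<subseteq> {..<n}" using w01_imgC0[OF k1] kn by auto
    have tp: "?t permutes {..<n}" by (rule permutes_subset[OF tp0 sub])
    have fC: "finite (C0 k 1)" by (rule finite_subset[of _ "{..<k + 1}"]) (auto simp: C0_def)
    have st: "sign ?t = sign c" by (rule sign_map_permutation[OF w01_inj pc fC])
    have e2: "wr ?d (w01 k) c = vr ?d ?t (w01 k)"
    proof (rule ext)
      fix j
      show "wr ?d (w01 k) c j = vr ?d ?t (w01 k) j"
      proof (cases "j < ?d")
        case False then show ?thesis by (simp add: wr_def vr_def)
      next
        case jd: True
        show ?thesis
        proof (cases "j = 1")
          case False
          then have jC: "j \<in> C0 k 1" using jd l1 by (intro C0_1_mem) auto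
          show ?thesis using jd map_permutation_apply[OF w01_inj jC, where h = c] by simp
        next
          case True
          have "0 \<in> C0 k 1" using k1 by (intro C0_1_mem) auto
          then have "?t (w01 k 0) = w01 k (c 0)" using map_permutation_apply[OF w01_inj] by blast
          moreover have "w01 k 1 = w01 k 0" "w01 k (c 0) = 0" "w01 k (c 1) = 0"
            using \<open>c 0 = 0\<close> c1 k1 by (auto simp: w01_apply)
          ultimately show ?thesis using True jd by simp
        qed
      qed
    qed
    have "?f (wr ?d (wr ?d (w01 k) c) r) = of_int (sign c)"
      using e1 e2 iso w0 tp f0 st unfolding iso_def by simp
    then show ?thesis using True by (simp add: sign_sq_c)
  next
    case False
    let ?v = "wr ?d (wr ?d (w01 k) c) r"
    have d2: "0 < ?d" "1 < ?d" using k1 l1 by auto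
    have r01: "r 0 < 2" "r 1 < 2" "r 0 \<noteq> r 1" using rs permutes_inj[OF rp] by (auto dest: injD)
    have c0: "c 0 \<noteq> 1"
    proof
      assume "c 0 = 1"
      then have "c 0 = c 1" using c1 by simp
      then show False using injD[OF permutes_inj[OF cp]] by fastforce
    qed
    have c0': "c 0 < ?d" using perm_lt[OF cp d2(1)] .
    have "?v 0 \<noteq> ?v 1"
    proof -
      have "(r 0 = 0 \<and> r 1 = 1) \<or> (r 0 = 1 \<and> r 1 = 0)" using r01 by linarith
      moreover have "w01 k (c 0) \<noteq> 0" "w01 k (c 1) = 0"
        using c0 c0' False c1 l1 d2 by (auto simp: w01_apply)
      moreover have "?v 0 = w01 k (c (r 0))" "?v 1 = w01 k (c (r 1))"
        using d2 perm_lt[OF rp] by auto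
      ultimately show ?thesis by auto
    qed
    have "?f ?v = 0"
    proof (rule prj_dlt_zero)
      fix \<sigma> assume s: "\<sigma> permutes {..<n}"
      show "vr ?d \<sigma> ?v \<noteq> w01 k"
      proof
        assume e: "vr ?d \<sigma> ?v = w01 k"
        have "\<sigma> (?v 0) = w01 k 0" "\<sigma> (?v 1) = w01 k 1" using e d2 by (metis vr_apply)+
        moreover have "w01 k 0 = w01 k 1" using d2 l1 by (simp add: w01_apply)
        ultimately have "\<sigma> (?v 0) = \<sigma> (?v 1)" by simp
        then have "?v 0 = ?v 1" using permutes_inj[OF s] by (meson injD)
        then show False using \<open>?v 0 \<noteq> ?v 1\<close> by simp
      qed
    qed
    then show ?thesis using False by simp
  qed
qed

lemma case1_low:
  assumes l1: "l = 1" and kn: "k \<le> n" and k1: "1 \<le> k" and nk: "n \<le> k + 1"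
  shows "Yf k l (prj n (k + l) (dlt (w01 k))) (w01 k) \<noteq> 0"
proof -
  let ?f = "prj n (k + l) (dlt (w01 k))"
  define N :: nat where "N = (\<Sum>c\<in>CG k l. card (RG k l) * (if c 0 = 0 then 1 else 0))"
  have "Yf k l ?f (w01 k) = (\<Sum>c\<in>CG k l. \<Sum>r\<in>RG k l. (if c 0 = 0 then 1 else 0))"
    unfolding Yf_double
    by (intro sum.cong refl) (rule case1_term[OF assms])
  also have "\<dots> = of_nat N" unfolding N_def of_nat_sum by (intro sum.cong refl) simp
  finally have Y: "Yf k l ?f (w01 k) = of_nat N" .
  have "card (RG k l) * (if id 0 = 0 then 1 else 0) \<le> N"
    unfolding N_def
    using member_le_sum[of id "CG k l" "\<lambda>c. card (RG k l) * (if c 0 = 0 then 1 else 0::nat)"] Gp_id Gp_fin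
    by auto
  moreover have "card (RG k l) > 0" using Gp_id Gp_fin card_gt_0_iff by blast
  ultimately have "N > 0" by simp
  then show ?thesis using Y by simp
qed

lemma one_dim:
  assumes lk: "l \<le> k" and w0: "w0 \<in> words n (k + l)" and iso1: "iso n (k + l) f1"
    and nz: "Yf k l f1 w0 \<noteq> 0"
    and up: "\<And>f w. iso n (k + l) f \<Longrightarrow> Yf k l f w0 = 0 \<Longrightarrow> w \<in> words n (k + l) \<Longrightarrow> Yf k l f w = 0"
  shows "vector_space.dim tscale (Sset n k l) = 1"
proof (rule dim_one)
  show "Yext n k l f1 \<in> Sset n k l" by (rule Low[OF lk iso1])
  show "Yext n k l f1 \<noteq> 0"
  proof
    assume "Yext n k l f1 = 0"
    then have "Yext n k l f1 w0 = 0" by simp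
    then show False using nz w0 by (simp add: Yext_def)
  qed
  fix F assume F: "F \<in> Sset n k l"
  obtain f where f: "iso n (k + l) f" "F = Yext n k l f" using Up[OF lk F] by blast
  define a where "a = Yf k l f w0 / Yf k l f1 w0"
  let ?g = "\<lambda>v. f v - a * f1 v"
  have ig: "iso n (k + l) ?g" by (rule iso_lin[OF f(1) iso1])
  have "Yf k l ?g w0 = 0" using nz unfolding Yf_lin a_def by simp
  then have z: "Yf k l ?g w = 0" if "w \<in> words n (k + l)" for w using up[OF ig _ that] by simp
  have "F = tscale a (Yext n k l f1)"
  proof (rule ext)
    fix w
    show "F w = tscale a (Yext n k l f1) w"
    proof (cases "w \<in> words n (k + l)")
      case True
      then have "Yf k l f w = a * Yf k l f1 w" using z[OF True] unfolding Yf_lin by simp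
      then show ?thesis using True f(2) by (simp add: Yext_def tscale_def)
    next
      case False
      then show ?thesis using f(2) by (simp add: Yext_def tscale_def)
    qed
  qed
  then show "\<exists>a. F = tscale a (Yext n k l f1)" by blast
qed

lemma zero_dim:
  assumes lk: "l \<le> k" and kn: "k \<le> n"
    and notin: "(k, l) \<notin> {(n - 1, 0), (n, 0), (n - 1, 1), (n, 1)}"
  shows "vector_space.dim tscale (Sset n k l) = 0"
proof (rule dim_zero)
  show "Sset n k l \<subseteq> {0}"
  proof
    fix F assume F: "F \<in> Sset n k l"
    obtain f where f: "iso n (k + l) f" "F = Yext n k l f" using Up[OF lk F] by blast
    have "F = 0"
    proof (rule ext)
      fix w show "F w = 0 w"
        using Zall[OF f(1) _ lk kn notin, of w] f(2) by (simp add: Yext_def)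
    qed
    then show "F \<in> {0}" by simp
  qed
qed

theorem theoremA:
  fixes n k l :: nat
  assumes "2 \<le> n" and "l \<le> k" and "k \<le> n"
  shows "(0 < sign_multiplicity (conj_part [k, l]) n \<longleftrightarrow>
            (k, l) \<in> {(n - 1, 0), (n, 0), (n - 1, 1), (n, 1)})
       \<and> ((k, l) \<in> {(n - 1, 0), (n, 0), (n - 1, 1), (n, 1)} \<longrightarrow>
            sign_multiplicity (conj_part [k, l]) n = 1)"
proof -
  have sm: "sign_multiplicity (conj_part [k, l]) n = vector_space.dim tscale (Sset n k l)"
    by (simp add: sign_multiplicity_def Sset_def)
  show ?thesis
  proof (cases "(k, l) \<in> {(n - 1, 0), (n, 0), (n - 1, 1), (n, 1)}")
    case False
    then show ?thesis using zero_dim[OF assms(2,3) False] sm by simp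
  next
    case True
    then have kk: "k = n - 1 \<or> k = n" and ll: "l = 0 \<or> l = 1" by auto
    have k1: "1 \<le> k" using kk assms(1) by auto
    have nk: "n \<le> k + 1" using kk by auto
    have "vector_space.dim tscale (Sset n k l) = 1"
    proof (cases "l = 0")
      case l0: True
      show ?thesis
      proof (rule one_dim[OF assms(2) _ iso_prj case0_low[OF l0 assms(3) nk]])
        show "w00 k \<in> words n (k + l)" using w00_words[OF assms(3)] l0 by simp
        fix f w assume "iso n (k + l) f" "Yf k l f (w00 k) = 0" "w \<in> words n (k + l)"
        then show "Yf k l f w = 0" by (rule case0_up[OF l0 assms(3)])
      qed
    next
      case False
      then have l1: "l = 1" using ll by simp
      show ?thesis
      proof (rule one_dim[OF assms(2) _ iso_prj case1_low[OF l1 assms(3) k1 nk]])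
        show "w01 k \<in> words n (k + l)" using w01_words[OF assms(3) k1] l1 by simp
        fix f w assume "iso n (k + l) f" "Yf k l f (w01 k) = 0" "w \<in> words n (k + l)"
        then show "Yf k l f w = 0" by (rule case1_up[OF l1 assms(3) k1])
      qed
    qed
    then show ?thesis using True sm by simp
  qed
qed

end
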